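(* Let $H$ be a Hilbert space, $\ell\ge1$, and $\mathbf{b}=[b_1,\dots,b_\ell]^t$ with $b_j\in\mathcal{B}(H)$. Then $b_1,\dots,b_\ell$ are linearly independent modulo $\mathcal{K}(H)$ if and only if there exists a weakly null net $(\xi_\alpha)_\alpha$ of unit vectors in $H$ such that $\lim_\alpha Q(\mathbf{b},\xi_\alpha)$ (exists and) is positive definite.
   Context: $\mathcal{K}(H)$ is the ideal of compact operators; linear independence modulo $\mathcal{K}(H)$ means the cosets $b_j+\mathcal{K}(H)$ are linearly independent in $\mathcal{B}(H)/\mathcal{K}(H)$. For $\xi\in H$, $Q(\mathbf{b},\xi)=(\langle b_j\xi,b_i\xi\rangle)_{i,j=1}^\ell\in M_\ell(\mathbb{C})$. *)

theory Defs
  imports "HOL-Analysis.Analysis"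
begin

text \<open>Complex inner product spaces (not available in the distribution libraries).
  The inner product is linear in the first argument, conjugate-linear in the second.\<close>

class complex_inner = real_normed_vector +
  fixes scaleC :: "complex \<Rightarrow> 'a \<Rightarrow> 'a"
    and cinner :: "'a \<Rightarrow> 'a \<Rightarrow> complex"
  assumes scaleC_add_right: "scaleC a (x + y) = scaleC a x + scaleC a y"
    and scaleC_add_left: "scaleC (a + b) x = scaleC a x + scaleC b x"
    and scaleC_scaleC: "scaleC a (scaleC b x) = scaleC (a * b) x"
    and scaleC_one: "scaleC 1 x = x"
    and scaleR_scaleC: "scaleR r x = scaleC (complex_of_real r) x"
    and cinner_add_left: "cinner (x + y) z = cinner x z + cinner y z"
    and cinner_scaleC_left: "cinner (scaleC a x) y = a * cinner x y"
    and cinner_commute: "cinner y x = cnj (cinner x y)"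
    and cinner_self_real: "Im (cinner x x) = 0"
    and cinner_self_eq_0: "cinner x x = 0 \<longleftrightarrow> x = 0"
    and norm_eq_sqrt_cinner: "norm x = sqrt (Re (cinner x x))"

class chilbert_space = complex_inner + complete_space

definition bounded_op :: "('a::complex_inner \<Rightarrow> 'a) \<Rightarrow> bool" where
  "bounded_op f \<longleftrightarrow> (\<forall>x y. f (x + y) = f x + f y) \<and> (\<forall>c x. f (scaleC c x) = scaleC c (f x))
     \<and> (\<exists>K. \<forall>x. norm (f x) \<le> norm x * K)"

definition compact_op :: "('a::complex_inner \<Rightarrow> 'a) \<Rightarrow> bool" where
  "compact_op f \<longleftrightarrow> bounded_op f \<and> compact (closure (f ` {x. norm x \<le> 1}))"

definition lin_indep_mod_compact :: "nat \<Rightarrow> (nat \<Rightarrow> 'a::complex_inner \<Rightarrow> 'a) \<Rightarrow> bool" where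
  "lin_indep_mod_compact l b \<longleftrightarrow>
     (\<forall>c :: nat \<Rightarrow> complex. compact_op (\<lambda>x. \<Sum>j<l. scaleC (c j) (b j x)) \<longrightarrow> (\<forall>j<l. c j = 0))"

definition Qmat :: "(nat \<Rightarrow> 'a::complex_inner \<Rightarrow> 'a) \<Rightarrow> 'a \<Rightarrow> nat \<Rightarrow> nat \<Rightarrow> complex" where
  "Qmat b \<xi> i j = cinner (b j \<xi>) (b i \<xi>)"

definition pos_def_mat :: "nat \<Rightarrow> (nat \<Rightarrow> nat \<Rightarrow> complex) \<Rightarrow> bool" where
  "pos_def_mat l M \<longleftrightarrow> (\<forall>i<l. \<forall>j<l. M j i = cnj (M i j)) \<and>
     (\<forall>v :: nat \<Rightarrow> complex. (\<exists>i<l. v i \<noteq> 0) \<longrightarrow>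
        0 < Re (\<Sum>i<l. \<Sum>j<l. cnj (v i) * M i j * v j))"

end

theory Submission
  imports Defs
begin

lemma scaleC_zero_left[simp]: "scaleC 0 (x::'a::complex_inner) = 0"
proof -
  have "scaleC (complex_of_real 0) x = scaleR 0 x" by (simp only: scaleR_scaleC)
  then show ?thesis by simp
qed

lemma scaleC_zero_right[simp]: "scaleC a (0::'a::complex_inner) = 0"
proof -
  have "scaleC a (0::'a) = scaleC a 0 + scaleC a 0" by (metis scaleC_add_right add_0)
  then show ?thesis by simp
qed

lemma scaleC_minus_left: "scaleC (-a) (x::'a::complex_inner) = - scaleC a x"
proof -
  have "scaleC (-a) x + scaleC a x = scaleC (-a + a) x" by (simp only: scaleC_add_left)
  then have "scaleC (-a) x + scaleC a x = 0" by simp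
  then show ?thesis by (simp add: eq_neg_iff_add_eq_0)
qed

lemma scaleC_minus_right: "scaleC a (- x::'a::complex_inner) = - scaleC a x"
proof -
  have "scaleC a (-x) + scaleC a x = scaleC a (-x + x)" by (simp only: scaleC_add_right)
  then have "scaleC a (-x) + scaleC a x = 0" by simp
  then show ?thesis by (simp add: eq_neg_iff_add_eq_0)
qed

lemma scaleC_diff_right: "scaleC a (x - y::'a::complex_inner) = scaleC a x - scaleC a y"
  unfolding diff_conv_add_uminus by (simp only: scaleC_add_right scaleC_minus_right)

lemma scaleC_diff_left: "scaleC (a - b) (x::'a::complex_inner) = scaleC a x - scaleC b x"
  unfolding diff_conv_add_uminus by (simp only: scaleC_add_left scaleC_minus_left)

lemma scaleC_sum_right: "scaleC a (sum f A) = (\<Sum>i\<in>A. scaleC a (f i::'a::complex_inner))"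
  by (induction A rule: infinite_finite_induct) (auto simp: scaleC_add_right)

lemma scaleC_sum_left: "scaleC (sum f A) (x::'a::complex_inner) = (\<Sum>i\<in>A. scaleC (f i) x)"
  by (induction A rule: infinite_finite_induct) (auto simp: scaleC_add_left)

lemma scaleC_one'[simp]: "scaleC 1 (x::'a::complex_inner) = x" by (rule scaleC_one)

lemma cinner_zero_left[simp]: "cinner 0 (y::'a::complex_inner) = 0"
proof -
  have "cinner (scaleC 0 y) y = 0 * cinner y y" by (rule cinner_scaleC_left)
  then show ?thesis by simp
qed

lemma cinner_zero_right[simp]: "cinner (y::'a::complex_inner) 0 = 0"
  by (subst cinner_commute) simp

lemma cinner_add_right: "cinner (x::'a::complex_inner) (y + z) = cinner x y + cinner x z"
  by (subst (1 2 3) cinner_commute) (simp add: cinner_add_left)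

lemma cinner_scaleC_right: "cinner (x::'a::complex_inner) (scaleC a y) = cnj a * cinner x y"
  by (subst (1 2) cinner_commute) (simp add: cinner_scaleC_left)

lemma cinner_minus_left: "cinner (- x::'a::complex_inner) y = - cinner x y"
proof -
  have "cinner (- x) y + cinner x y = cinner (-x + x) y" by (simp only: cinner_add_left)
  then show ?thesis by (simp add: eq_neg_iff_add_eq_0)
qed

lemma cinner_minus_right: "cinner (x::'a::complex_inner) (- y) = - cinner x y"
  by (subst (1 2) cinner_commute) (simp add: cinner_minus_left)

lemma cinner_diff_left: "cinner (x - y::'a::complex_inner) z = cinner x z - cinner y z"
  unfolding diff_conv_add_uminus by (simp only: cinner_add_left cinner_minus_left)

lemma cinner_diff_right: "cinner (x::'a::complex_inner) (y - z) = cinner x y - cinner x z"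
  unfolding diff_conv_add_uminus by (simp only: cinner_add_right cinner_minus_right)

lemma cinner_sum_left: "cinner (sum f A) (y::'a::complex_inner) = (\<Sum>i\<in>A. cinner (f i) y)"
  by (induction A rule: infinite_finite_induct) (auto simp: cinner_add_left)

lemma cinner_sum_right: "cinner (y::'a::complex_inner) (sum f A) = (\<Sum>i\<in>A. cinner y (f i))"
  by (induction A rule: infinite_finite_induct) (auto simp: cinner_add_right)

lemma Re_cinner_self_nonneg: "Re (cinner (x::'a::complex_inner) x) \<ge> 0"
  by (metis norm_eq_sqrt_cinner norm_ge_zero real_sqrt_ge_0_iff)

lemma norm_sq_cinner: "(norm (x::'a::complex_inner))^2 = Re (cinner x x)"
  using Re_cinner_self_nonneg[of x] by (simp add: norm_eq_sqrt_cinner)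

lemma cinner_self: "cinner (x::'a::complex_inner) x = complex_of_real ((norm x)^2)"
  by (simp add: norm_sq_cinner complex_eq_iff cinner_self_real)

lemma Re_cinner_commute: "Re (cinner (y::'a::complex_inner) x) = Re (cinner x y)"
  by (subst cinner_commute) simp

lemma norm_scaleC: "norm (scaleC a (x::'a::complex_inner)) = cmod a * norm x"
proof -
  have "cinner (scaleC a x) (scaleC a x) = (a * cnj a) * cinner x x"
    by (simp add: cinner_scaleC_left cinner_scaleC_right mult_ac)
  also have "\<dots> = complex_of_real ((cmod a * norm x)^2)"
    by (simp only: complex_norm_square[symmetric] cinner_self power_mult_distrib of_real_mult)
  finally have "(norm (scaleC a x))^2 = (cmod a * norm x)^2" by (simp add: norm_sq_cinner)
  then show ?thesis by (simp add: power2_eq_iff_nonneg)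
qed

lemma norm_add_sq: "(norm (x + y::'a::complex_inner))^2 = (norm x)^2 + (norm y)^2 + 2 * Re (cinner x y)"
proof -
  have "(norm (x+y))^2 = Re (cinner x x + cinner x y + cinner y x + cinner y y)"
    by (simp add: norm_sq_cinner cinner_add_left cinner_add_right)
  also have "\<dots> = (norm x)^2 + (norm y)^2 + 2 * Re (cinner x y)"
    by (simp add: norm_sq_cinner Re_cinner_commute[of y x])
  finally show ?thesis .
qed

lemma norm_diff_sq: "(norm (x - y::'a::complex_inner))^2 = (norm x)^2 + (norm y)^2 - 2 * Re (cinner x y)"
  using norm_add_sq[of x "-y"] by (simp add: cinner_minus_right)

lemma Cauchy_Schwarz: "cmod (cinner (x::'a::complex_inner) y) \<le> norm x * norm y"
proof (cases "y = 0")
  case True then show ?thesis by simp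
next
  case False
  then have ny: "norm y > 0" by simp
  define t where "t = cinner x y / complex_of_real ((norm y)^2)"
  have "0 \<le> (norm (x - scaleC t y))^2" by simp
  also have "\<dots> = (norm x)^2 + (cmod t)^2 * (norm y)^2 - 2 * Re (cnj t * cinner x y)"
    by (simp add: norm_diff_sq norm_scaleC cinner_scaleC_right power_mult_distrib)
  also have "cnj t * cinner x y = complex_of_real ((cmod (cinner x y))^2 / (norm y)^2)"
  proof -
    have "cnj t * cinner x y = (cinner x y * cnj (cinner x y)) / complex_of_real ((norm y)^2)"
      unfolding t_def by (simp add: mult.commute)
    also have "\<dots> = complex_of_real ((cmod (cinner x y))^2 / (norm y)^2)"
      by (simp only: complex_norm_square[symmetric] of_real_divide)
    finally show ?thesis .
  qed
  also have "(cmod t)^2 = (cmod (cinner x y))^2 / (norm y)^4"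
    unfolding t_def by (simp add: norm_divide power_divide norm_power flip: power_mult)
  finally have A: "0 \<le> (norm x)^2 + (cmod (cinner x y))^2 / (norm y)^4 * (norm y)^2 - 2 * ((cmod (cinner x y))^2 / (norm y)^2)"
    by simp
  have e: "(cmod (cinner x y))^2 / (norm y)^4 * (norm y)^2 = (cmod (cinner x y))^2 / (norm y)^2"
    using ny by (auto simp: field_simps eval_nat_numeral)
  have "(cmod (cinner x y))^2 / (norm y)^2 \<le> (norm x)^2" using A e by linarith
  then have "(cmod (cinner x y))^2 \<le> (norm x * norm y)^2"
    using ny by (simp add: pos_divide_le_eq power_mult_distrib)
  then show ?thesis by (rule power2_le_imp_le) simp
qed

lemma bop_add: "bounded_op f \<Longrightarrow> f (x + y) = f x + f y"
  unfolding bounded_op_def by blast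

lemma bop_scaleC: "bounded_op f \<Longrightarrow> f (scaleC c x) = scaleC c (f x)"
  unfolding bounded_op_def by blast

lemma bop_zero: "bounded_op (f::'a::complex_inner \<Rightarrow> 'a) \<Longrightarrow> f 0 = 0"
  using bop_add[of f 0 0] by simp

lemma bop_minus: "bounded_op (f::'a::complex_inner \<Rightarrow> 'a) \<Longrightarrow> f (- x) = - f x"
  using bop_add[of f "-x" x] bop_zero[of f] by (simp add: eq_neg_iff_add_eq_0)

lemma bop_diff: "bounded_op (f::'a::complex_inner \<Rightarrow> 'a) \<Longrightarrow> f (x - y) = f x - f y"
  unfolding diff_conv_add_uminus by (simp only: bop_add bop_minus)

lemma bop_sum: "bounded_op (f::'a::complex_inner \<Rightarrow> 'a) \<Longrightarrow> f (sum g A) = (\<Sum>i\<in>A. f (g i))"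
  by (induction A rule: infinite_finite_induct) (auto simp: bop_add bop_zero)

lemma bop_bound: "bounded_op (f::'a::complex_inner \<Rightarrow> 'a) \<Longrightarrow> \<exists>K>0. \<forall>x. norm (f x) \<le> norm x * K"
proof -
  assume "bounded_op f"
  then obtain K where K: "\<forall>x. norm (f x) \<le> norm x * K" unfolding bounded_op_def by blast
  have "\<forall>x. norm (f x) \<le> norm x * max K 1"
    by (metis K max.cobounded1 mult_left_mono norm_ge_zero order_trans)
  then show ?thesis by (intro exI[of _ "max K 1"]) auto
qed

lemma bop_bounds:
  assumes "\<forall>j<l. bounded_op (b j :: 'a::complex_inner \<Rightarrow> 'a)"
  obtains K where "\<forall>j. K j > 0" "\<forall>j<l. \<forall>x. norm (b j x) \<le> norm x * K j"
proof -
  have "\<forall>j. \<exists>K>0. j < l \<longrightarrow> (\<forall>x. norm (b j x) \<le> norm x * K)"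
    using assms bop_bound by (metis zero_less_one)
  then obtain K where "\<forall>j. K j > 0 \<and> (j < l \<longrightarrow> (\<forall>x. norm (b j x) \<le> norm x * K j))"
    by metis
  then show ?thesis using that by blast
qed

definition comb :: "nat \<Rightarrow> (nat \<Rightarrow> complex) \<Rightarrow> (nat \<Rightarrow> 'a::complex_inner \<Rightarrow> 'a) \<Rightarrow> 'a \<Rightarrow> 'a" where
  "comb l c b x = (\<Sum>j<l. scaleC (c j) (b j x))"

definition nrm1 :: "nat \<Rightarrow> (nat \<Rightarrow> complex) \<Rightarrow> real" where
  "nrm1 l v = (\<Sum>i<l. cmod (v i))"

lemma nrm1_nonneg: "nrm1 l v \<ge> 0"
  unfolding nrm1_def by (simp add: sum_nonneg)

lemma nrm1_pos_iff: "nrm1 l v > 0 \<longleftrightarrow> (\<exists>i<l. v i \<noteq> 0)"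
proof -
  have "nrm1 l v = 0 \<longleftrightarrow> (\<forall>i<l. v i = 0)"
    unfolding nrm1_def by (subst sum_nonneg_eq_0_iff) auto
  then show ?thesis using nrm1_nonneg[of l v] by force
qed

lemma nrm1_triangle: "nrm1 l v \<le> nrm1 l w + nrm1 l (\<lambda>i. v i - w i)"
proof -
  have "nrm1 l v \<le> (\<Sum>i<l. cmod (w i) + cmod (v i - w i))"
    unfolding nrm1_def by (rule sum_mono) (metis add.commute diff_add_cancel norm_triangle_ineq)
  then show ?thesis by (simp add: nrm1_def sum.distrib)
qed

lemma nrm1_scale: "nrm1 l (\<lambda>i. a * v i) = cmod a * nrm1 l v"
  unfolding nrm1_def by (simp add: norm_mult sum_distrib_left)

lemma comb_add: "(\<forall>j<l. bounded_op (b j)) \<Longrightarrow> comb l c b (x + y) = comb l c b x + comb l c b y"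
  unfolding comb_def by (simp add: bop_add scaleC_add_right sum.distrib)

lemma comb_scaleC: "(\<forall>j<l. bounded_op (b j)) \<Longrightarrow> comb l c b (scaleC a x) = scaleC a (comb l c b x)"
  unfolding comb_def by (simp add: bop_scaleC scaleC_sum_right scaleC_scaleC mult.commute)

lemma comb_norm_le:
  assumes "\<forall>j<l. \<forall>x. norm (b j x) \<le> norm x * K j" "\<forall>j. K j > 0"
  shows "norm (comb l c b x) \<le> nrm1 l c * (\<Sum>j<l. K j) * norm x"
proof -
  have "norm (comb l c b x) \<le> (\<Sum>j<l. norm (scaleC (c j) (b j x)))"
    unfolding comb_def by (rule norm_sum)
  also have "\<dots> \<le> (\<Sum>j<l. cmod (c j) * ((\<Sum>j<l. K j) * norm x))"
  proof (rule sum_mono)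
    fix j assume j: "j \<in> {..<l}"
    have "K j \<le> (\<Sum>j<l. K j)"
      using j assms(2) by (intro member_le_sum) (auto intro: less_imp_le)
    then have "norm (b j x) \<le> (\<Sum>j<l. K j) * norm x"
      using assms(1) j by (metis lessThan_iff mult.commute mult_right_mono norm_ge_zero order_trans)
    then show "norm (scaleC (c j) (b j x)) \<le> cmod (c j) * ((\<Sum>j<l. K j) * norm x)"
      by (simp add: norm_scaleC mult_left_mono)
  qed
  also have "\<dots> = nrm1 l c * (\<Sum>j<l. K j) * norm x"
    unfolding nrm1_def by (simp add: sum_distrib_right mult.assoc)
  finally show ?thesis .
qed

lemma comb_diff: "comb l v b x - comb l w b x = comb l (\<lambda>i. v i - w i) b x"
  unfolding comb_def by (simp add: scaleC_diff_left sum_subtractf)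

lemma bop_comb:
  assumes "\<forall>j<l. bounded_op (b j :: 'a::complex_inner \<Rightarrow> 'a)"
  shows "bounded_op (comb l c b)"
proof -
  obtain K where K: "\<forall>j. K j > 0" "\<forall>j<l. \<forall>x. norm (b j x) \<le> norm x * K j"
    using bop_bounds[OF assms] by blast
  show ?thesis unfolding bounded_op_def
    using comb_add[OF assms] comb_scaleC[OF assms] comb_norm_le[OF K(2,1)]
    by (metis mult.commute)
qed

lemma Q_quadratic:
  "(\<Sum>i<l. \<Sum>j<l. cnj (v i) * Qmat b \<xi> i j * v j) = cinner (comb l v b \<xi>) (comb l v b \<xi>)"
proof -
  have "cinner (comb l v b \<xi>) (comb l v b \<xi>) = (\<Sum>i<l. \<Sum>j<l. cinner (scaleC (v j) (b j \<xi>)) (scaleC (v i) (b i \<xi>)))"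
    unfolding comb_def by (simp only: cinner_sum_left cinner_sum_right)
  also have "\<dots> = (\<Sum>i<l. \<Sum>j<l. cnj (v i) * Qmat b \<xi> i j * v j)"
    unfolding Qmat_def by (intro sum.cong refl) (simp add: cinner_scaleC_left cinner_scaleC_right)
  finally show ?thesis by simp
qed

lemma Q_quadratic_Re:
  "Re (\<Sum>i<l. \<Sum>j<l. cnj (v i) * Qmat b \<xi> i j * v j) = (norm (comb l v b \<xi>))^2"
  by (simp add: Q_quadratic norm_sq_cinner)

lemma parallelogram:
  "(norm (x + y::'a::complex_inner))^2 + (norm (x - y))^2 = 2*(norm x)^2 + 2*(norm y)^2"
  by (simp add: norm_add_sq norm_diff_sq)

lemma closest_point_orth:
  fixes u :: "'a::chilbert_space" and N :: "'a set"
  assumes N0: "0 \<in> N" and Nadd: "\<And>x y. x \<in> N \<Longrightarrow> y \<in> N \<Longrightarrow> x + y \<in> N"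
    and Nsc: "\<And>c x. x \<in> N \<Longrightarrow> scaleC c x \<in> N" and clN: "closed N"
  shows "\<exists>p\<in>N. \<forall>n\<in>N. cinner (u - p) n = 0"
proof -
  define D where "D = (\<lambda>n. norm (u - n)) ` N"
  define d where "d = Inf D"
  have Dne: "D \<noteq> {}" using N0 by (auto simp: D_def)
  have Dbdd: "bdd_below D" unfolding D_def by (rule bdd_belowI[of _ 0]) auto
  have d_le: "d \<le> norm (u - n)" if "n \<in> N" for n
    unfolding d_def using that Dbdd by (intro cInf_lower) (auto simp: D_def)
  have d_nonneg: "0 \<le> d" using d_le[OF N0] Dne Dbdd unfolding d_def
    by (metis cInf_greatest D_def imageE norm_ge_zero)
  have "\<forall>k. \<exists>n\<in>N. norm (u - n) < d + 1 / real (Suc k)"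
  proof
    fix k
    have "Inf D < d + 1 / real (Suc k)" unfolding d_def by simp
    from cInf_lessD[OF Dne this] show "\<exists>n\<in>N. norm (u - n) < d + 1 / real (Suc k)"
      by (auto simp: D_def)
  qed
  then obtain s where sN: "\<And>k. s k \<in> N" and s_lt: "\<And>k. norm (u - s k) < d + 1 / real (Suc k)"
    by metis
  define e where "e k = 1 / real (Suc k)" for k
  have e_pos: "e k > 0" for k by (simp add: e_def)
  have e_le1: "e k \<le> 1" for k by (simp add: e_def)
  have sq_bound: "(norm (u - s k))^2 \<le> d^2 + (2*d+1) * e k" for k
  proof -
    have "norm (u - s k) < d + e k" using s_lt[of k] by (simp add: e_def)
    then have "(norm (u - s k))^2 \<le> (d + e k)^2"
      by (intro power_mono) auto
    also have "\<dots> = d^2 + 2*d*e k + e k * e k" by (simp add: power2_eq_square algebra_simps)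
    also have "\<dots> \<le> d^2 + 2*d*e k + e k"
      using e_le1[of k] e_pos[of k] by (simp add: mult_le_cancel_left1)
    finally show ?thesis by (simp add: algebra_simps)
  qed
  have mid: "(norm (s k - s m))^2 \<le> 2*(2*d+1)*(e k + e m)" for k m
  proof -
    define mm where "mm = scaleC (complex_of_real (1/2)) (s k + s m)"
    have mmN: "mm \<in> N" unfolding mm_def by (intro Nsc Nadd sN)
    have mm': "mm = scaleR (1/2) (s k + s m)" unfolding mm_def by (simp add: scaleR_scaleC)
    have "(u - s k) + (u - s m) = scaleR 2 (u - mm)" unfolding mm' by (simp add: algebra_simps scaleR_2)
    then have "norm ((u - s k) + (u - s m)) = 2 * norm (u - mm)" by simp
    moreover have "(u - s k) - (u - s m) = s m - s k" by simp
    ultimately have "(2 * norm (u - mm))^2 + (norm (s m - s k))^2 = 2*(norm (u - s k))^2 + 2*(norm (u - s m))^2"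
      using parallelogram[of "u - s k" "u - s m"] by simp
    moreover have "d^2 \<le> (norm (u - mm))^2" using d_le[OF mmN] d_nonneg by (intro power_mono) auto
    ultimately have "(norm (s m - s k))^2 \<le> 2*(norm (u - s k))^2 + 2*(norm (u - s m))^2 - 4 * d^2"
      by (simp add: power_mult_distrib)
    also have "\<dots> \<le> 2*(2*d+1)*(e k + e m)" using sq_bound[of k] sq_bound[of m] by (simp add: algebra_simps)
    finally show ?thesis by (simp add: norm_minus_commute)
  qed
  have "Cauchy s"
  proof (rule CauchyI)
    fix r :: real assume r: "r > 0"
    have pos: "0 < r^2 / (4*(2*d+1))" using r d_nonneg by simp
    obtain M where M: "inverse (real (Suc M)) < r^2 / (4*(2*d+1))"
      using reals_Archimedean[OF pos] by blast
    show "\<exists>M. \<forall>m\<ge>M. \<forall>n\<ge>M. norm (s m - s n) < r"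
    proof (intro exI allI impI)
      fix m n assume mn: "m \<ge> M" "n \<ge> M"
      have em: "e m \<le> e M" "e n \<le> e M" using mn by (auto simp: e_def frac_le)
      have "(norm (s m - s n))^2 \<le> 2*(2*d+1)*(e m + e n)" by (rule mid)
      also have "\<dots> \<le> 2*(2*d+1)*(2 * e M)" using em d_nonneg by (intro mult_left_mono) auto
      also have "\<dots> < 2*(2*d+1)*(2 * (r^2 / (4*(2*d+1))))"
        using M d_nonneg by (intro mult_strict_left_mono) (auto simp: e_def inverse_eq_divide)
      also have "\<dots> = r^2" using d_nonneg by (simp add: field_simps)
      finally show "norm (s m - s n) < r" using r by (simp add: power_less_imp_less_base)
    qed
  qed
  then obtain p where sp: "s \<longlonglongrightarrow> p" using Cauchy_convergent_iff convergent_def by blast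
  have pN: "p \<in> N" using clN sN sp closed_sequentially by blast
  have up: "norm (u - p) \<le> d"
  proof (rule tendsto_le[OF sequentially_bot])
    show "(\<lambda>k. d + e k) \<longlonglongrightarrow> d"
      using tendsto_add[OF tendsto_const LIMSEQ_inverse_real_of_nat] by (simp add: e_def inverse_eq_divide)
    show "(\<lambda>k. norm (u - s k)) \<longlonglongrightarrow> norm (u - p)"
      by (intro tendsto_norm tendsto_diff tendsto_const sp)
    show "\<forall>\<^sub>F k in sequentially. norm (u - s k) \<le> d + e k"
      using s_lt by (auto simp: e_def less_imp_le)
  qed
  define w where "w = u - p"
  have wmin: "norm w \<le> norm (w - x)" if "x \<in> N" for x
  proof -
    have "p + x \<in> N" by (intro Nadd pN that)
    then have "d \<le> norm (u - (p + x))" by (rule d_le)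
    then show ?thesis using up unfolding w_def by (simp add: algebra_simps)
  qed
  have orth: "cinner w n = 0" if nN: "n \<in> N" for n
  proof -
    define c where "c = cinner w n"
    define s where "s = 1 / ((norm n)^2 + 1)"
    have np: "0 < (norm n)^2 + 1" by (simp add: add_nonneg_pos)
    have s_pos: "s > 0" unfolding s_def using np by simp
    define t where "t = complex_of_real s * c"
    have "scaleC t n \<in> N" by (intro Nsc nN)
    then have "(norm w)^2 \<le> (norm (w - scaleC t n))^2" using wmin by (simp add: power_mono)
    also have "\<dots> = (norm w)^2 + (cmod t)^2 * (norm n)^2 - 2 * Re (cnj t * c)"
      by (simp add: norm_diff_sq norm_scaleC cinner_scaleC_right power_mult_distrib c_def)
    also have "cnj t * c = complex_of_real (s * (cmod c)^2)"
    proof -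
      have "cnj t * c = complex_of_real s * (c * cnj c)" unfolding t_def by (simp add: mult_ac)
      also have "c * cnj c = complex_of_real ((cmod c)^2)" by (rule complex_norm_square[symmetric])
      finally show ?thesis by simp
    qed
    also have "(cmod t)^2 = s^2 * (cmod c)^2"
      unfolding t_def using s_pos by (simp add: norm_mult power_mult_distrib)
    finally have "0 \<le> s^2 * (cmod c)^2 * (norm n)^2 - 2 * (s * (cmod c)^2)" by simp
    then have "0 \<le> s * (cmod c)^2 * (s * (norm n)^2 - 2)" by (simp add: algebra_simps power2_eq_square)
    moreover have "s * (norm n)^2 < 1" unfolding s_def using np by (simp add: divide_simps)
    ultimately have "s * (cmod c)^2 \<le> 0"
      unfolding zero_le_mult_iff by auto
    then have "(cmod c)^2 \<le> 0" using s_pos by (simp add: mult_le_0_iff)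
    then show ?thesis unfolding c_def by simp
  qed
  show ?thesis using pN orth unfolding w_def by blast
qed

lemma riesz:
  fixes \<phi> :: "'a::chilbert_space \<Rightarrow> complex"
  assumes add: "\<And>x y. \<phi> (x + y) = \<phi> x + \<phi> y" and sc: "\<And>c x. \<phi> (scaleC c x) = c * \<phi> x"
    and bd: "\<And>x. cmod (\<phi> x) \<le> norm x * K"
  shows "\<exists>z. \<forall>x. \<phi> x = cinner x z"
proof (cases "\<forall>x. \<phi> x = 0")
  case True
  then show ?thesis by (intro exI[of _ 0]) simp
next
  case False
  then obtain u where u: "\<phi> u \<noteq> 0" by blast
  have phi0: "\<phi> 0 = 0" using sc[of 0 0] by simp
  have phidiff: "\<phi> (x - y) = \<phi> x - \<phi> y" for x y
    using add[of "x - y" y] by simp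
  define N where "N = {x. \<phi> x = 0}"
  have clN: "closed N"
    unfolding closed_sequential_limits
  proof (intro allI impI)
    fix xs l assume H: "(\<forall>n. xs n \<in> N) \<and> xs \<longlonglongrightarrow> l"
    have "cmod (\<phi> l) \<le> 0"
    proof (rule tendsto_le[OF sequentially_bot])
      show "(\<lambda>n. norm (l - xs n) * K) \<longlonglongrightarrow> 0"
      proof (intro tendsto_mult_left_zero tendsto_norm_zero)
        have "(\<lambda>n. l - xs n) \<longlonglongrightarrow> l - l" using H by (intro tendsto_diff tendsto_const) auto
        then show "(\<lambda>n. l - xs n) \<longlonglongrightarrow> 0" by simp
      qed
      show "((\<lambda>n. cmod (\<phi> l)) \<longlonglongrightarrow> cmod (\<phi> l))" by simp
      show "\<forall>\<^sub>F n in sequentially. cmod (\<phi> l) \<le> norm (l - xs n) * K"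
        using H bd[of "l - xs _"] by (auto simp: N_def phidiff)
    qed
    then show "l \<in> N" by (simp add: N_def)
  qed
  obtain p where pN: "p \<in> N" and orth: "\<forall>n\<in>N. cinner (u - p) n = 0"
    using closest_point_orth[of N u] clN phi0 add sc by (auto simp: N_def)
  define w where "w = u - p"
  have phiw: "\<phi> w = \<phi> u" using pN by (simp add: w_def phidiff N_def)
  then have w0: "w \<noteq> 0" using u phi0 by auto
  then have ww: "cinner w w \<noteq> 0" by (simp add: cinner_self_eq_0)
  define z where "z = scaleC (cnj (\<phi> w / cinner w w)) w"
  show ?thesis
  proof (intro exI allI)
    fix x
    define y where "y = x - scaleC (\<phi> x / \<phi> w) w"
    have "\<phi> y = 0" unfolding y_def using phiw u by (simp add: phidiff sc)
    then have "cinner w y = 0" using orth by (simp add: N_def w_def)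
    then have "cinner y w = 0" by (subst cinner_commute) simp
    then have "cinner x w = (\<phi> x / \<phi> w) * cinner w w"
      unfolding y_def by (simp add: cinner_diff_left cinner_scaleC_left)
    then show "\<phi> x = cinner x z"
      unfolding z_def using ww phiw u by (simp add: cinner_scaleC_right field_simps)
  qed
qed

lemma adjoint_exists:
  fixes T :: "'a::chilbert_space \<Rightarrow> 'a"
  assumes "bounded_op T"
  shows "\<exists>z. \<forall>x. cinner (T x) y = cinner x z"
proof -
  obtain K where K: "K > 0" "\<forall>x. norm (T x) \<le> norm x * K" using bop_bound[OF assms] by blast
  show ?thesis
  proof (rule riesz[where K = "K * norm y"])
    show "cinner (T (x + z)) y = cinner (T x) y + cinner (T z) y" for x z
      by (simp add: bop_add[OF assms] cinner_add_left)
    show "cinner (T (scaleC c x)) y = c * cinner (T x) y" for c x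
      by (simp add: bop_scaleC[OF assms] cinner_scaleC_left)
    show "cmod (cinner (T x) y) \<le> norm x * (K * norm y)" for x
    proof -
      have "cmod (cinner (T x) y) \<le> norm (T x) * norm y" by (rule Cauchy_Schwarz)
      also have "\<dots> \<le> norm x * K * norm y" using K by (intro mult_right_mono) auto
      finally show ?thesis by (simp add: mult.assoc)
    qed
  qed
qed

lemma compact_op_weak_null:
  fixes T :: "'a::chilbert_space \<Rightarrow> 'a" and \<xi> :: "'i \<Rightarrow> 'a"
  assumes cT: "compact_op T" and unit: "\<forall>\<alpha>. norm (\<xi> \<alpha>) = 1"
    and wn: "\<forall>\<eta>. ((\<lambda>\<alpha>. cinner (\<xi> \<alpha>) \<eta>) \<longlongrightarrow> 0) F"
  shows "((\<lambda>\<alpha>. (norm (T (\<xi> \<alpha>)))^2) \<longlongrightarrow> 0) F"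
proof -
  have bT: "bounded_op T" using cT by (simp add: compact_op_def)
  obtain K where K: "K > 0" "\<forall>x. norm (T x) \<le> norm x * K" using bop_bound[OF bT] by blast
  define S where "S = closure (T ` {x. norm x \<le> 1})"
  have cS: "compact S" using cT by (simp add: compact_op_def S_def)
  have "\<forall>y. \<exists>z. \<forall>x. cinner (T x) y = cinner x z" using adjoint_exists[OF bT] by blast
  then obtain zf where "\<forall>y x. cinner (T x) y = cinner x (zf y)" by (rule choice[THEN exE])
  then have zf: "\<And>x y. cinner (T x) y = cinner x (zf y)" by blast
  show ?thesis
    unfolding tendsto_iff
  proof (intro allI impI)
    fix r :: real assume r: "r > 0"
    define e where "e = r / (K + 2)"
    have e: "e > 0" using r K by (simp add: e_def)
    have tb: "\<forall>\<epsilon>>0. \<exists>k. finite k \<and> S \<subseteq> (\<Union>x\<in>k. ball x \<epsilon>)"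
      using cS compact_eq_totally_bounded by blast
    obtain k where k: "finite k" "S \<subseteq> (\<Union>y\<in>k. ball y e)"
      using tb e by blast
    have "\<forall>y\<in>k. eventually (\<lambda>\<alpha>. dist (cinner (\<xi> \<alpha>) (zf y)) 0 < e) F"
    proof
      fix y show "eventually (\<lambda>\<alpha>. dist (cinner (\<xi> \<alpha>) (zf y)) 0 < e) F"
        using tendstoD[OF wn[rule_format] e] .
    qed
    then have ev: "eventually (\<lambda>\<alpha>. \<forall>y\<in>k. dist (cinner (\<xi> \<alpha>) (zf y)) 0 < e) F"
      by (rule eventually_ball_finite[OF k(1)])
    show "eventually (\<lambda>\<alpha>. dist ((norm (T (\<xi> \<alpha>)))^2) 0 < r) F"
    proof (rule eventually_mono[OF ev])
      fix \<alpha> assume H: "\<forall>y\<in>k. dist (cinner (\<xi> \<alpha>) (zf y)) 0 < e"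
      have "T (\<xi> \<alpha>) \<in> S" unfolding S_def using unit by (intro closure_subset[THEN subsetD]) auto
      then obtain y where y: "y \<in> k" "dist y (T (\<xi> \<alpha>)) < e" using k(2) by auto
      have nT: "norm (T (\<xi> \<alpha>)) \<le> K" using K(2) unit by (metis mult_1)
      have "(norm (T (\<xi> \<alpha>)))^2 = Re (cinner (T (\<xi> \<alpha>)) (T (\<xi> \<alpha>) - y)) + Re (cinner (T (\<xi> \<alpha>)) y)"
        by (simp add: norm_sq_cinner cinner_diff_right)
      also have "\<dots> \<le> norm (T (\<xi> \<alpha>)) * norm (T (\<xi> \<alpha>) - y) + cmod (cinner (\<xi> \<alpha>) (zf y))"
        using Cauchy_Schwarz[of "T (\<xi> \<alpha>)" "T (\<xi> \<alpha>) - y"] complex_Re_le_cmod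
        by (intro add_mono) (auto simp: zf intro: order_trans)
      also have "\<dots> \<le> K * e + e"
      proof -
        have a: "norm (T (\<xi> \<alpha>) - y) \<le> e" using y(2) by (simp add: dist_norm norm_minus_commute)
        have b: "cmod (cinner (\<xi> \<alpha>) (zf y)) \<le> e" using H y(1) by (auto simp: dist_norm intro: less_imp_le)
        have c: "norm (T (\<xi> \<alpha>)) * norm (T (\<xi> \<alpha>) - y) \<le> K * e"
          using a nT K(1) by (intro mult_mono) auto
        show ?thesis using b c by linarith
      qed
      also have "\<dots> < r"
      proof -
        have "K * e + e = (K + 1) * e" by (simp add: algebra_simps)
        also have "\<dots> < (K + 2) * e" using e by simp
        also have "\<dots> = r" using K by (simp add: e_def)
        finally show ?thesis .
      qed
      finally show "dist ((norm (T (\<xi> \<alpha>)))^2) 0 < r" by simp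
    qed
  qed
qed

lemma dir2:
  fixes b :: "nat \<Rightarrow> 'a::chilbert_space \<Rightarrow> 'a" and \<xi> :: "'i \<Rightarrow> 'a"
  assumes bop: "\<forall>j<l. bounded_op (b j)" and Fnb: "F \<noteq> bot"
    and unit: "\<forall>\<alpha>. norm (\<xi> \<alpha>) = 1"
    and wn: "\<forall>\<eta>. ((\<lambda>\<alpha>. cinner (\<xi> \<alpha>) \<eta>) \<longlongrightarrow> 0) F"
    and lim: "\<forall>i<l. \<forall>j<l. ((\<lambda>\<alpha>. Qmat b (\<xi> \<alpha>) i j) \<longlongrightarrow> M i j) F"
    and pd: "pos_def_mat l M"
  shows "lin_indep_mod_compact l b"
  unfolding lin_indep_mod_compact_def
proof (rule allI, rule impI)
  fix c :: "nat \<Rightarrow> complex"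
  assume "compact_op (\<lambda>x. \<Sum>j<l. scaleC (c j) (b j x))"
  then have cT: "compact_op (comb l c b)" by (simp add: comb_def[abs_def])
  show "\<forall>j<l. c j = 0"
  proof (rule ccontr)
    assume "\<not> (\<forall>j<l. c j = 0)"
    then have "\<exists>i<l. c i \<noteq> 0" by blast
    then have pos: "0 < Re (\<Sum>i<l. \<Sum>j<l. cnj (c i) * M i j * c j)"
      using pd unfolding pos_def_mat_def by blast
    have t1: "((\<lambda>\<alpha>. Re (\<Sum>i<l. \<Sum>j<l. cnj (c i) * Qmat b (\<xi> \<alpha>) i j * c j))
        \<longlongrightarrow> Re (\<Sum>i<l. \<Sum>j<l. cnj (c i) * M i j * c j)) F"
    proof (intro tendsto_Re tendsto_sum)
      fix i j assume ij: "i \<in> {..<l}" "j \<in> {..<l}"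
      then have "((\<lambda>\<alpha>. Qmat b (\<xi> \<alpha>) i j) \<longlongrightarrow> M i j) F" using lim by simp
      then show "((\<lambda>\<alpha>. cnj (c i) * Qmat b (\<xi> \<alpha>) i j * c j) \<longlongrightarrow> cnj (c i) * M i j * c j) F"
        by (intro tendsto_mult_right tendsto_mult_left)
    qed
    have t2: "((\<lambda>\<alpha>. Re (\<Sum>i<l. \<Sum>j<l. cnj (c i) * Qmat b (\<xi> \<alpha>) i j * c j)) \<longlongrightarrow> 0) F"
      unfolding Q_quadratic_Re using compact_op_weak_null[OF cT unit wn] .
    from tendsto_unique[OF Fnb t1 t2] pos show False by simp
  qed
qed

definition orthonormal :: "'a::complex_inner set \<Rightarrow> bool" where
  "orthonormal U \<longleftrightarrow> (\<forall>u\<in>U. cinner u u = 1) \<and> (\<forall>u\<in>U. \<forall>v\<in>U. u \<noteq> v \<longrightarrow> cinner u v = 0)"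

definition proj :: "'a::complex_inner set \<Rightarrow> 'a \<Rightarrow> 'a" where
  "proj U x = (\<Sum>u\<in>U. scaleC (cinner x u) u)"

lemma sum_on_orth:
  assumes "finite U" "orthonormal U" "v \<in> U"
  shows "cinner (\<Sum>u\<in>U. scaleC (c u) u) v = c v"
proof -
  have "cinner (\<Sum>u\<in>U. scaleC (c u) u) v = (\<Sum>u\<in>U. c u * cinner u v)"
    by (simp add: cinner_sum_left cinner_scaleC_left)
  also have "\<dots> = c v * cinner v v + (\<Sum>u\<in>U - {v}. c u * cinner u v)"
    using assms by (simp add: sum.remove)
  also have "(\<Sum>u\<in>U - {v}. c u * cinner u v) = 0"
    using assms by (intro sum.neutral) (auto simp: orthonormal_def)
  finally show ?thesis using assms by (simp add: orthonormal_def)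
qed

lemma proj_resid_orth:
  assumes "finite U" "orthonormal U" "v \<in> U"
  shows "cinner (x - proj U x) v = 0"
  using sum_on_orth[OF assms, of "\<lambda>u. cinner x u"] by (simp add: proj_def cinner_diff_left)

lemma orth_to_sum:
  assumes "\<forall>u\<in>U. cinner r u = 0"
  shows "cinner r (\<Sum>u\<in>U. scaleC (c u) u) = 0"
  using assms by (simp add: cinner_sum_right cinner_scaleC_right)

lemma proj_resid_norm:
  assumes "finite U" "orthonormal U"
  shows "norm (x - proj U x) \<le> norm x"
proof -
  have h: "\<forall>u\<in>U. cinner (x - proj U x) u = 0" using proj_resid_orth[OF assms] by blast
  have e: "proj U x = (\<Sum>u\<in>U. scaleC (cinner x u) u)" by (simp add: proj_def)
  have o: "cinner (x - proj U x) (proj U x) = 0"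
    using orth_to_sum[OF h, of "\<lambda>u. cinner x u"] by (simp add: e[symmetric])
  have "(norm x)^2 = (norm ((x - proj U x) + proj U x))^2" by simp
  also have "\<dots> = (norm (x - proj U x))^2 + (norm (proj U x))^2"
    by (subst norm_add_sq) (simp add: o)
  finally have "(norm (x - proj U x))^2 \<le> (norm x)^2" by simp
  then show ?thesis by (rule power2_le_imp_le) simp
qed

lemma gram_schmidt:
  fixes E :: "'a::complex_inner set"
  assumes "finite E"
  shows "\<exists>U. finite U \<and> orthonormal U \<and> (\<forall>e\<in>E. proj U e = e)"
  using assms
proof (induction E rule: finite_induct)
  case empty
  show ?case by (intro exI[of _ "{}"]) (simp add: orthonormal_def)
next
  case (insert a E)
  then obtain U where U: "finite U" "orthonormal U" "\<forall>e\<in>E. proj U e = e" by blast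
  define a' where "a' = a - proj U a"
  show ?case
  proof (cases "a' = 0")
    case True
    then have "proj U a = a" by (simp add: a'_def)
    then show ?thesis using U by auto
  next
    case False
    define w where "w = scaleC (complex_of_real (1 / norm a')) a'"
    have na: "norm a' > 0" using False by simp
    have wa: "cinner w u = 0" if "u \<in> U" for u
      unfolding w_def a'_def using proj_resid_orth[OF U(1,2) that] by (simp add: cinner_scaleC_left)
    have nw: "norm w = 1" unfolding w_def using na by (simp add: norm_scaleC norm_divide)
    have ww: "cinner w w = 1" using nw by (simp add: cinner_self)
    have wU: "w \<notin> U" using wa ww by force
    define U' where "U' = insert w U"
    have wa': "cinner u w = 0" if "u \<in> U" for u
      using wa[OF that] by (subst cinner_commute) simp
    have on: "orthonormal U'"
      using U(2) wa wa' ww unfolding orthonormal_def U'_def by blast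
    have projU': "proj U' x = scaleC (cinner x w) w + proj U x" for x
      unfolding U'_def proj_def using U(1) wU by simp
    have "proj U' e = e" if "e \<in> E" for e
    proof -
      have "cinner e w = 0"
      proof -
        have "cinner w e = cinner w (proj U e)" using U(3) that by simp
        also have "\<dots> = 0" unfolding proj_def using wa by (intro orth_to_sum) auto
        finally show ?thesis by (subst cinner_commute) simp
      qed
      then show ?thesis using projU' U(3) that by simp
    qed
    moreover have "proj U' a = a"
    proof -
      have "cinner (proj U a) w = 0"
      proof -
        have "cinner w (proj U a) = 0" unfolding proj_def using wa by (intro orth_to_sum) auto
        then show ?thesis by (subst cinner_commute) simp
      qed
      then have "cinner a w = cinner a' w" by (simp add: a'_def cinner_diff_left)
      also have "\<dots> = complex_of_real (norm a')"
        unfolding w_def using na by (simp add: cinner_scaleC_right cinner_self power2_eq_square)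
      finally have "scaleC (cinner a w) w = a'"
        unfolding w_def using na by (simp add: scaleC_scaleC)
      then show ?thesis using projU' by (simp add: a'_def)
    qed
    ultimately show ?thesis using U(1) on unfolding U'_def by (intro exI[of _ "insert w U"]) auto
  qed
qed

lemma scaleC_decomp: "scaleC z (v::'a::complex_inner) = scaleR (Re z) v + scaleR (Im z) (scaleC \<i> v)"
proof -
  have e: "complex_of_real (Re z) + complex_of_real (Im z) * \<i> = z" by (simp add: complex_eq_iff)
  have "scaleC z v = scaleC (complex_of_real (Re z) + complex_of_real (Im z) * \<i>) v"
    by (simp only: e)
  also have "\<dots> = scaleR (Re z) v + scaleR (Im z) (scaleC \<i> v)"
    by (simp add: scaleC_add_left scaleR_scaleC scaleC_scaleC)
  finally show ?thesis .
qed

lemma continuous_on_scaleC_left: "continuous_on S (\<lambda>z. scaleC (f z) (v::'a::complex_inner))"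
  if "continuous_on S f"
proof -
  have "(\<lambda>z. scaleC (f z) v) = (\<lambda>z. scaleR (Re (f z)) v + scaleR (Im (f z)) (scaleC \<i> v))"
    by (rule ext, rule scaleC_decomp)
  then show ?thesis by (simp only:) (intro continuous_intros that)
qed

lemma finite_comb_compact:
  fixes f :: "'b \<Rightarrow> 'a::complex_inner"
  assumes "finite U"
  shows "\<exists>C. compact C \<and> (\<forall>c. (\<forall>u\<in>U. cmod (c u) \<le> 1) \<longrightarrow> (\<Sum>u\<in>U. scaleC (c u) (f u)) \<in> C)"
  using assms
proof (induction U rule: finite_induct)
  case empty
  show ?case by (intro exI[of _ "{0}"]) auto
next
  case (insert w U)
  then obtain C where C: "compact C" "\<forall>c. (\<forall>u\<in>U. cmod (c u) \<le> 1) \<longrightarrow> (\<Sum>u\<in>U. scaleC (c u) (f u)) \<in> C"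
    by blast
  define C' where "C' = (\<lambda>p. fst p + scaleC (snd p) (f w)) ` (C \<times> cball 0 1)"
  have "compact C'" unfolding C'_def
    by (intro compact_continuous_image compact_Times C(1) compact_cball continuous_intros
        continuous_on_scaleC_left)
  moreover have "(\<Sum>u\<in>insert w U. scaleC (c u) (f u)) \<in> C'" if "\<forall>u\<in>insert w U. cmod (c u) \<le> 1" for c
  proof -
    have "(\<Sum>u\<in>U. scaleC (c u) (f u)) \<in> C" using C(2) that by auto
    moreover have "c w \<in> cball 0 1" using that by auto
    ultimately show ?thesis unfolding C'_def using insert(1,2)
      by (auto intro!: image_eqI[of _ _ "((\<Sum>u\<in>U. scaleC (c u) (f u)), c w)"] simp: add.commute)
  qed
  ultimately show ?case by blast
qed

lemma orthonormal_norm: "orthonormal U \<Longrightarrow> u \<in> U \<Longrightarrow> norm u = 1"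
  unfolding orthonormal_def by (simp add: norm_eq_sqrt_cinner)

lemma compact_crit:
  fixes T :: "'a::chilbert_space \<Rightarrow> 'a"
  assumes bT: "bounded_op T"
    and H: "\<And>\<epsilon>. \<epsilon> > 0 \<Longrightarrow> \<exists>E. finite E \<and> (\<forall>x. norm x = 1 \<longrightarrow> (\<forall>e\<in>E. cinner x e = 0) \<longrightarrow> norm (T x) \<le> \<epsilon>)"
  shows "compact_op T"
proof -
  define S where "S = closure (T ` {x. norm x \<le> 1})"
  have "complete S" unfolding S_def by (simp add: complete_eq_closed)
  moreover have "\<forall>\<epsilon>>0. \<exists>k. finite k \<and> S \<subseteq> (\<Union>y\<in>k. ball y \<epsilon>)"
  proof (intro allI impI)
    fix \<epsilon> :: real assume \<epsilon>: "\<epsilon> > 0"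
    then have \<epsilon>3: "\<epsilon> / 3 > 0" by simp
    obtain E where E: "finite E" "\<forall>x. norm x = 1 \<longrightarrow> (\<forall>e\<in>E. cinner x e = 0) \<longrightarrow> norm (T x) \<le> \<epsilon>/3"
      using H[OF \<epsilon>3] by blast
    obtain U where U: "finite U" "orthonormal U" "\<forall>e\<in>E. proj U e = e"
      using gram_schmidt[OF E(1)] by blast
    obtain C where C: "compact C" "\<forall>c. (\<forall>u\<in>U. cmod (c u) \<le> 1) \<longrightarrow> (\<Sum>u\<in>U. scaleC (c u) (T u)) \<in> C"
      using finite_comb_compact[OF U(1)] by blast
    have tb: "\<forall>\<epsilon>>0. \<exists>k. finite k \<and> C \<subseteq> (\<Union>x\<in>k. ball x \<epsilon>)"
      using C(1) compact_eq_totally_bounded by blast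
    obtain k where k: "finite k" "C \<subseteq> (\<Union>y\<in>k. ball y (\<epsilon>/3))"
      using tb \<epsilon>3 by blast
    show "\<exists>k. finite k \<and> S \<subseteq> (\<Union>y\<in>k. ball y \<epsilon>)"
    proof (intro exI conjI subsetI)
      show "finite k" by fact
      fix z assume "z \<in> S"
      then obtain x where x: "norm x \<le> 1" "dist (T x) z < \<epsilon>/3"
        using \<epsilon>3 unfolding S_def closure_approachable by blast
      define r where "r = x - proj U x"
      have nr: "norm r \<le> 1" using proj_resid_norm[OF U(1,2), of x] x(1) unfolding r_def by linarith
      have rE: "\<forall>e\<in>E. cinner r e = 0"
      proof
        fix e assume e: "e \<in> E"
        have "cinner r e = cinner r (proj U e)" using U(3) e by simp
        also have "\<dots> = 0" unfolding proj_def[of U e] r_def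
          using proj_resid_orth[OF U(1,2)] by (intro orth_to_sum) blast
        finally show "cinner r e = 0" .
      qed
      have Tr: "norm (T r) \<le> \<epsilon>/3"
      proof (cases "r = 0")
        case True
        then show ?thesis using bop_zero[OF bT] \<epsilon>3 by simp
      next
        case False
        then have nr0: "norm r > 0" by simp
        define r' where "r' = scaleC (complex_of_real (1 / norm r)) r"
        have "norm r' = 1" unfolding r'_def using nr0 by (simp add: norm_scaleC norm_divide)
        moreover have "\<forall>e\<in>E. cinner r' e = 0" unfolding r'_def using rE by (simp add: cinner_scaleC_left)
        ultimately have "norm (T r') \<le> \<epsilon>/3" using E(2) by blast
        moreover have "norm (T r') = norm (T r) / norm r"
          unfolding r'_def using nr0 by (simp add: bop_scaleC[OF bT] norm_scaleC norm_divide)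
        ultimately have "norm (T r) \<le> \<epsilon>/3 * norm r" using nr0 by (simp add: divide_le_eq)
        also have "\<dots> \<le> \<epsilon>/3" using nr \<epsilon>3 by (simp add: mult_left_le)
        finally show ?thesis .
      qed
      have Tp: "T (proj U x) \<in> C"
      proof -
        have "T (proj U x) = (\<Sum>u\<in>U. scaleC (cinner x u) (T u))"
          unfolding proj_def by (simp add: bop_sum[OF bT] bop_scaleC[OF bT])
        moreover have "\<forall>u\<in>U. cmod (cinner x u) \<le> 1"
        proof
          fix u assume u: "u \<in> U"
          have "cmod (cinner x u) \<le> norm x * norm u" by (rule Cauchy_Schwarz)
          also have "\<dots> \<le> 1" using orthonormal_norm[OF U(2) u] x(1) by simp
          finally show "cmod (cinner x u) \<le> 1" .
        qed
        ultimately show ?thesis using C(2) by simp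
      qed
      then obtain y where y: "y \<in> k" "dist y (T (proj U x)) < \<epsilon>/3" using k(2) by auto
      have Tx: "T x = T (proj U x) + T r" unfolding r_def by (simp add: bop_add[OF bT, symmetric])
      have d1: "dist y z \<le> dist y (T x) + dist (T x) z" by (rule dist_triangle)
      have d2: "dist y (T x) \<le> dist y (T (proj U x)) + dist (T (proj U x)) (T x)" by (rule dist_triangle)
      have "dist y z \<le> dist y (T (proj U x)) + dist (T (proj U x)) (T x) + dist (T x) z"
        using d1 d2 by linarith
      also have "dist (T (proj U x)) (T x) = norm (T r)" unfolding Tx by (simp add: dist_norm)
      finally have "dist y z < \<epsilon>" using y(2) Tr x(2) by linarith
      then show "z \<in> (\<Union>y\<in>k. ball y \<epsilon>)" using y(1) by auto
    qed
  qed
  ultimately have "compact S" using compact_eq_totally_bounded by blast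
  then show ?thesis using bT by (simp add: compact_op_def S_def)
qed

lemma BW_coords:
  fixes f :: "nat \<Rightarrow> nat \<Rightarrow> complex"
  assumes "\<forall>k. \<forall>i<n. cmod (f k i) \<le> B"
  shows "\<exists>r u. strict_mono r \<and> (\<forall>i<n. (\<lambda>k. f (r k) i) \<longlonglongrightarrow> u i)"
  using assms
proof (induction n)
  case 0
  show ?case by (intro exI[of _ id]) (auto simp: strict_mono_def)
next
  case (Suc n)
  then obtain r u where ru: "strict_mono r" "\<forall>i<n. (\<lambda>k. f (r k) i) \<longlonglongrightarrow> u i" by auto
  define g where "g k = f (r k) n" for k
  have "bounded (range g)" unfolding bounded_iff g_def using Suc.prems by auto
  then obtain a s where s: "strict_mono s" "(g \<circ> s) \<longlonglongrightarrow> a"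
    using bounded_imp_convergent_subsequence by blast
  show ?case
  proof (intro exI conjI allI impI)
    show "strict_mono (r \<circ> s)" using ru(1) s(1) strict_mono_o by blast
    fix i assume i: "i < Suc n"
    show "(\<lambda>k. f ((r \<circ> s) k) i) \<longlonglongrightarrow> (u(n := a)) i"
    proof (cases "i = n")
      case True
      then show ?thesis using s(2) by (simp add: g_def o_def)
    next
      case False
      then have "i < n" using i by simp
      then have "((\<lambda>k. f (r k) i) \<circ> s) \<longlonglongrightarrow> u i" using ru(2) s(1) LIMSEQ_subseq_LIMSEQ by blast
      then show ?thesis using False by (simp add: o_def)
    qed
  qed
qed

lemma comb_cscale: "comb l (\<lambda>i. a * v i) b x = scaleC a (comb l v b x)"
  unfolding comb_def by (simp add: scaleC_sum_right scaleC_scaleC)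

lemma nrm1_unit0: "nrm1 l (\<lambda>i. if i = 0 then 1 else 0) = 1" if "l \<ge> 1"
proof -
  have "nrm1 l (\<lambda>i. if i = 0 then 1 else 0) = (\<Sum>i<l. if i = 0 then 1 else 0)"
    unfolding nrm1_def by (rule sum.cong) auto
  also have "\<dots> = 1" using that by (simp add: sum.delta)
  finally show ?thesis .
qed

lemma unif_delta:
  fixes b :: "nat \<Rightarrow> 'a::chilbert_space \<Rightarrow> 'a"
  assumes l: "l \<ge> 1" and bop: "\<forall>j<l. bounded_op (b j)" and li: "lin_indep_mod_compact l b"
  shows "\<exists>\<delta>>0. \<forall>v E. finite E \<longrightarrow> (\<exists>x. norm x = 1 \<and> (\<forall>e\<in>E. cinner x e = 0) \<and> \<delta> * nrm1 l v \<le> norm (comb l v b x))"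
proof (rule ccontr)
  assume na: "\<not> ?thesis"
  have A: "\<exists>v E. finite E \<and> (\<forall>x. norm x = 1 \<longrightarrow> (\<forall>e\<in>E. cinner x e = 0) \<longrightarrow> norm (comb l v b x) < \<delta> * nrm1 l v)"
    if "\<delta> > 0" for \<delta>
  proof -
    have "\<not> (\<forall>v E. finite E \<longrightarrow> (\<exists>x. norm x = 1 \<and> (\<forall>e\<in>E. cinner x e = 0) \<and> \<delta> * nrm1 l v \<le> norm (comb l v b x)))"
      using na that by blast
    then obtain v E where vE: "finite E" "\<not> (\<exists>x. norm x = 1 \<and> (\<forall>e\<in>E. cinner x e = 0) \<and> \<delta> * nrm1 l v \<le> norm (comb l v b x))"
      by blast
    show ?thesis
    proof (intro exI conjI allI impI)
      show "finite E" by fact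
      fix x assume x: "norm x = 1" "\<forall>e\<in>E. cinner x e = 0"
      then have "\<not> \<delta> * nrm1 l v \<le> norm (comb l v b x)" using vE(2) by blast
      then show "norm (comb l v b x) < \<delta> * nrm1 l v" by simp
    qed
  qed
  have B: "\<exists>u E. finite E \<and> nrm1 l u = 1 \<and> (\<forall>x. norm x = 1 \<longrightarrow> (\<forall>e\<in>E. cinner x e = 0) \<longrightarrow> norm (comb l u b x) \<le> 1 / real (Suc k))"
    for k
  proof -
    obtain v E where vE: "finite E" "\<forall>x. norm x = 1 \<longrightarrow> (\<forall>e\<in>E. cinner x e = 0) \<longrightarrow> norm (comb l v b x) < 1 / real (Suc k) * nrm1 l v"
      using A[of "1 / real (Suc k)"] by auto
    show ?thesis
    proof (cases "nrm1 l v > 0")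
      case True
      define u where "u i = complex_of_real (1 / nrm1 l v) * v i" for i
      have "nrm1 l u = cmod (complex_of_real (1 / nrm1 l v)) * nrm1 l v"
        unfolding u_def by (rule nrm1_scale)
      then have "nrm1 l u = 1" using True by (simp add: norm_divide)
      moreover have "norm (comb l u b x) \<le> 1 / real (Suc k)" if "norm x = 1" "\<forall>e\<in>E. cinner x e = 0" for x
      proof -
        have "norm (comb l u b x) = norm (comb l v b x) / nrm1 l v"
          unfolding u_def comb_cscale using True by (simp add: norm_scaleC norm_divide)
        also have "\<dots> < 1 / real (Suc k)" using vE(2) that True by (simp add: divide_less_eq)
        finally show ?thesis by simp
      qed
      ultimately show ?thesis using vE(1) by blast
    next
      case False
      then have "nrm1 l v = 0" using nrm1_nonneg[of l v] by simp
      then have "\<forall>x. norm x = 1 \<longrightarrow> (\<forall>e\<in>E. cinner x e = 0) \<longrightarrow> False" using vE(2) by auto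
      then show ?thesis using vE(1) nrm1_unit0[OF l] by blast
    qed
  qed
  obtain uf Ef where ufE: "\<And>k. finite (Ef k)" "\<And>k. nrm1 l (uf k) = 1"
    "\<And>k x. norm x = 1 \<Longrightarrow> (\<forall>e\<in>Ef k. cinner x e = 0) \<Longrightarrow> norm (comb l (uf k) b x) \<le> 1 / real (Suc k)"
    using B by metis
  have bnd: "\<forall>k. \<forall>i<l. cmod (uf k i) \<le> 1"
  proof (intro allI impI)
    fix k i assume "i < l"
    then have "cmod (uf k i) \<le> nrm1 l (uf k)" unfolding nrm1_def by (intro member_le_sum) auto
    then show "cmod (uf k i) \<le> 1" using ufE(2) by simp
  qed
  obtain r u where ru: "strict_mono r" "\<forall>i<l. (\<lambda>k. uf (r k) i) \<longlonglongrightarrow> u i"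
    using BW_coords[OF bnd] by blast
  have "(\<lambda>k. nrm1 l (uf (r k))) \<longlonglongrightarrow> nrm1 l u"
    unfolding nrm1_def using ru(2) by (intro tendsto_sum tendsto_norm) auto
  then have "nrm1 l u = 1" using ufE(2) by (simp add: LIMSEQ_const_iff)
  then have "\<exists>i<l. u i \<noteq> 0" using nrm1_pos_iff[of l u] by simp
  moreover have "compact_op (comb l u b)"
  proof (rule compact_crit[OF bop_comb[OF bop]])
    fix \<epsilon> :: real assume \<epsilon>: "\<epsilon> > 0"
    obtain K where K: "\<forall>j. K j > 0" "\<forall>j<l. \<forall>x. norm (b j x) \<le> norm x * K j"
      using bop_bounds[OF bop] by blast
    define C where "C = (\<Sum>j<l. K j)"
    have "0 \<in> {..<l}" using l by simp
    then have "{..<l} \<noteq> {}" by blast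
    then have C: "C > 0" unfolding C_def using K(1) by (intro sum_pos) auto
    define d where "d k = nrm1 l (\<lambda>i. uf (r k) i - u i)" for k
    have "d \<longlonglongrightarrow> nrm1 l (\<lambda>i. u i - u i)"
      unfolding d_def nrm1_def using ru(2) by (intro tendsto_sum tendsto_norm tendsto_diff tendsto_const) auto
    then have "d \<longlonglongrightarrow> 0" by (simp add: nrm1_def)
    then have "eventually (\<lambda>k. d k < \<epsilon> / (2 * C)) sequentially"
      using \<epsilon> C by (intro order_tendstoD(2)) auto
    then obtain N1 where N1: "\<And>k. k \<ge> N1 \<Longrightarrow> d k < \<epsilon> / (2 * C)" by (auto simp: eventually_sequentially)
    have "\<epsilon> / 2 > 0" using \<epsilon> by simp
    then obtain N2 where N2: "inverse (real N2) < \<epsilon> / 2" "N2 > 0" using reals_Archimedean by blast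
    define k where "k = max N1 N2"
    have dk: "d k * C < \<epsilon> / 2" using N1[of k] C by (simp add: k_def field_simps)
    have "r k \<ge> k" using ru(1) seq_suble by blast
    then have "1 / real (Suc (r k)) \<le> inverse (real N2)"
      using N2(2) by (simp add: k_def inverse_eq_divide frac_le)
    then have rk: "1 / real (Suc (r k)) < \<epsilon> / 2" using N2(1) by linarith
    show "\<exists>E. finite E \<and> (\<forall>x. norm x = 1 \<longrightarrow> (\<forall>e\<in>E. cinner x e = 0) \<longrightarrow> norm (comb l u b x) \<le> \<epsilon>)"
    proof (intro exI conjI allI impI)
      show "finite (Ef (r k))" by (rule ufE(1))
      fix x assume x: "norm x = 1" "\<forall>e\<in>Ef (r k). cinner x e = 0"
      have "comb l u b x = comb l (uf (r k)) b x - comb l (\<lambda>i. uf (r k) i - u i) b x"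
        by (simp add: comb_diff)
      then have "norm (comb l u b x) \<le> norm (comb l (uf (r k)) b x) + norm (comb l (\<lambda>i. uf (r k) i - u i) b x)"
        by (metis norm_triangle_ineq4)
      also have "\<dots> \<le> 1 / real (Suc (r k)) + d k * C * norm x"
        using ufE(3)[OF x] comb_norm_le[OF K(2,1), of "\<lambda>i. uf (r k) i - u i" x]
        unfolding d_def C_def by (intro add_mono) auto
      finally show "norm (comb l u b x) \<le> \<epsilon>" using x(1) dk rk by simp
    qed
  qed
  then have "\<forall>j<l. u j = 0" using li unfolding lin_indep_mod_compact_def comb_def[abs_def] by blast
  ultimately show False by blast
qed

lemma floor_approx:
  fixes K :: real and t :: real
  assumes K: "K > 0"
  shows "\<bar>t - of_int \<lfloor>K * t\<rfloor> / K\<bar> \<le> 1 / K"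
proof -
  have "of_int \<lfloor>K * t\<rfloor> \<le> K * t" "K * t < of_int \<lfloor>K * t\<rfloor> + 1" by linarith+
  then have "0 \<le> K * t - of_int \<lfloor>K * t\<rfloor>" "K * t - of_int \<lfloor>K * t\<rfloor> \<le> 1" by linarith+
  moreover have "t - of_int \<lfloor>K * t\<rfloor> / K = (K * t - of_int \<lfloor>K * t\<rfloor>) / K" using K by (simp add: field_simps)
  ultimately show ?thesis using K by (simp add: divide_right_mono)
qed

lemma floor_range:
  fixes K :: nat and t :: real
  assumes "\<bar>t\<bar> \<le> 1"
  shows "\<lfloor>real K * t\<rfloor> \<in> {- int K..int K}"
proof -
  have a: "-1 \<le> t" "t \<le> 1" using assms by auto
  have b1: "real K * t \<le> real K * 1" using a(2) by (intro mult_left_mono) auto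
  have b2: "real K * (-1) \<le> real K * t" using a(1) by (intro mult_left_mono) auto
  have "- int K \<le> \<lfloor>real K * t\<rfloor>" using b2 by (simp add: le_floor_iff)
  moreover have "\<lfloor>real K * t\<rfloor> \<le> int K" using b1 by (simp add: floor_le_iff)
  ultimately show ?thesis by simp
qed

lemma grid:
  fixes \<rho> :: real
  assumes "\<rho> > 0"
  shows "\<exists>V. finite V \<and> (\<forall>v. nrm1 l v = 1 \<longrightarrow> (\<exists>w\<in>V. nrm1 l (\<lambda>i. v i - w i) \<le> \<rho>))"
proof -
  obtain n :: nat where n: "2 * real l / \<rho> < real n" using reals_Archimedean2 by blast
  define K where "K = Suc n"
  have Kpos: "real K > 0" by (simp add: K_def)
  have Kb: "2 * real l / real K \<le> \<rho>"
  proof -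
    have "2 * real l / \<rho> \<le> real K" using n by (simp add: K_def)
    then have "2 * real l \<le> \<rho> * real K" using assms by (simp add: divide_le_eq mult.commute)
    then show ?thesis using Kpos by (simp add: divide_le_eq mult.commute)
  qed
  define G where "G = (\<lambda>(a, c). Complex (of_int a / real K) (of_int c / real K)) ` ({- int K..int K} \<times> {- int K..int K})"
  have fG: "finite G" unfolding G_def by simp
  define rnd where "rnd z = Complex (of_int \<lfloor>real K * Re z\<rfloor> / real K) (of_int \<lfloor>real K * Im z\<rfloor> / real K)" for z
  have rndG: "rnd z \<in> G" if "cmod z \<le> 1" for z
  proof -
    have "\<bar>Re z\<bar> \<le> 1" "\<bar>Im z\<bar> \<le> 1" using that abs_Re_le_cmod abs_Im_le_cmod by (auto intro: order_trans)
    then show ?thesis unfolding G_def rnd_def using floor_range by (auto intro!: image_eqI[of _ _ "(\<lfloor>real K * Re z\<rfloor>, \<lfloor>real K * Im z\<rfloor>)"])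
  qed
  have rnd_err: "cmod (z - rnd z) \<le> 2 / real K" for z
  proof -
    have "cmod (z - rnd z) \<le> \<bar>Re (z - rnd z)\<bar> + \<bar>Im (z - rnd z)\<bar>" by (rule cmod_le)
    also have "\<dots> \<le> 1 / real K + 1 / real K"
      unfolding rnd_def using floor_approx[OF Kpos] by (intro add_mono) auto
    finally show ?thesis by simp
  qed
  define V where "V = {w. \<forall>i. (i \<in> {..<l} \<longrightarrow> w i \<in> G) \<and> (i \<notin> {..<l} \<longrightarrow> w i = 0)}"
  have fV: "finite V" unfolding V_def by (rule finite_set_of_finite_funs) (auto simp: fG)
  have "\<exists>w\<in>V. nrm1 l (\<lambda>i. v i - w i) \<le> \<rho>" if v: "nrm1 l v = 1" for v
  proof -
    define w where "w i = (if i < l then rnd (v i) else 0)" for i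
    have "cmod (v i) \<le> 1" if "i < l" for i
    proof -
      have "cmod (v i) \<le> nrm1 l v" unfolding nrm1_def using that by (intro member_le_sum) auto
      then show ?thesis using v by simp
    qed
    then have "w \<in> V" unfolding V_def w_def using rndG by auto
    moreover have "nrm1 l (\<lambda>i. v i - w i) \<le> \<rho>"
    proof -
      have "nrm1 l (\<lambda>i. v i - w i) = (\<Sum>i<l. cmod (v i - rnd (v i)))"
        unfolding nrm1_def w_def by (intro sum.cong) auto
      also have "\<dots> \<le> (\<Sum>i<l. 2 / real K)" by (intro sum_mono rnd_err)
      also have "\<dots> = 2 * real l / real K" by simp
      finally show ?thesis using Kb by linarith
    qed
    ultimately show ?thesis by blast
  qed
  then show ?thesis using fV by blast
qed

lemma construct:
  fixes b :: "nat \<Rightarrow> 'a::chilbert_space \<Rightarrow> 'a"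
  assumes bop: "\<forall>j<l. bounded_op (b j)"
    and D: "\<forall>v E. finite E \<longrightarrow> (\<exists>x. norm x = 1 \<and> (\<forall>e\<in>E. cinner x e = 0) \<and> \<delta> * nrm1 l v \<le> norm (comb l v b x))"
    and V: "finite V" and E: "finite E"
  shows "\<exists>x. (\<forall>w\<in>V. norm (x w) = 1 \<and> (\<forall>e\<in>E. cinner (x w) e = 0) \<and> \<delta> * nrm1 l w \<le> norm (comb l w b (x w))) \<and>
             (\<forall>w\<in>V. \<forall>w'\<in>V. w \<noteq> w' \<longrightarrow> cinner (x w) (x w') = 0 \<and> (\<forall>i<l. \<forall>j<l. cinner (b j (x w)) (b i (x w')) = 0))"
proof -
  have h1: "\<forall>i y. \<exists>z. i < l \<longrightarrow> (\<forall>x. cinner (b i x) y = cinner x z)"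
    using adjoint_exists bop by blast
  have h2: "\<forall>i. \<exists>f. \<forall>y. i < l \<longrightarrow> (\<forall>x. cinner (b i x) y = cinner x (f y))"
  proof
    fix i show "\<exists>f. \<forall>y. i < l \<longrightarrow> (\<forall>x. cinner (b i x) y = cinner x (f y))"
      using h1 by (intro choice) blast
  qed
  from choice[OF h2] obtain adj where adj0: "\<forall>i y. i < l \<longrightarrow> (\<forall>x. cinner (b i x) y = cinner x (adj i y))"
    by blast
  have adj: "\<And>i y x. i < l \<Longrightarrow> cinner (b i x) y = cinner x (adj i y)" using adj0 by blast
  show ?thesis
    using V
  proof (induction V rule: finite_induct)
    case empty
    show ?case by simp
  next
    case (insert a V)
    from insert.IH obtain x where
      xx: "(\<forall>w\<in>V. norm (x w) = 1 \<and> (\<forall>e\<in>E. cinner (x w) e = 0) \<and> \<delta> * nrm1 l w \<le> norm (comb l w b (x w))) \<and>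
      (\<forall>w\<in>V. \<forall>w'\<in>V. w \<noteq> w' \<longrightarrow> cinner (x w) (x w') = 0 \<and> (\<forall>i<l. \<forall>j<l. cinner (b j (x w)) (b i (x w')) = 0))"
      ..
    note x1 = conjunct1[OF xx] and x2 = conjunct2[OF xx]
    define E' where "E' = E \<union> x ` V \<union> (\<Union>w\<in>V. \<Union>i\<in>{..<l}. \<Union>j\<in>{..<l}. {adj i (b j (x w))})"
    have fE': "finite E'" unfolding E'_def using E insert(1) by auto
    obtain y where y: "norm y = 1" "\<forall>e\<in>E'. cinner y e = 0" "\<delta> * nrm1 l a \<le> norm (comb l a b y)"
      using D fE' by blast
    define x' where "x' = x(a := y)"
    have yE: "\<forall>e\<in>E. cinner y e = 0" using y(2) by (auto simp: E'_def)
    have yx: "cinner y (x w) = 0" if "w \<in> V" for w using y(2) that by (auto simp: E'_def)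
    have yb: "cinner (b j y) (b i (x w)) = 0" if "w \<in> V" "i < l" "j < l" for w i j
    proof -
      have "cinner (b j y) (b i (x w)) = cinner y (adj j (b i (x w)))" using adj that by blast
      also have "\<dots> = 0" using y(2) that unfolding E'_def by blast
      finally show ?thesis .
    qed
    have P: "cinner (x' w) (x' w') = 0 \<and> (\<forall>i<l. \<forall>j<l. cinner (b j (x' w)) (b i (x' w')) = 0)"
      if "w \<in> insert a V" "w' \<in> insert a V" "w \<noteq> w'" for w w'
    proof (cases "w = a")
      case True
      then have "w' \<in> V" using that by auto
      moreover have "x' w' = x w'" using \<open>w' \<in> V\<close> insert(2) by (auto simp: x'_def)
      ultimately show ?thesis using True yx yb by (simp add: x'_def)
    next
      case False
      then have wV: "w \<in> V" using that by auto
      then have xw: "x' w = x w" using insert(2) by (auto simp: x'_def)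
      show ?thesis
      proof (cases "w' = a")
        case True
        have "cinner (x w) y = 0" using yx[OF wV] by (subst cinner_commute) simp
        moreover have "cinner (b j (x w)) (b i y) = 0" if "i < l" "j < l" for i j
          using yb[OF wV that(2,1)] by (subst cinner_commute) simp
        ultimately show ?thesis using True xw by (simp add: x'_def)
      next
        case False
        then have "w' \<in> V" "x' w' = x w'" using that insert(2) by (auto simp: x'_def)
        then show ?thesis using x2 wV xw \<open>w \<noteq> w'\<close> that(3) by simp
      qed
    qed
    have Q: "norm (x' w) = 1 \<and> (\<forall>e\<in>E. cinner (x' w) e = 0) \<and> \<delta> * nrm1 l w \<le> norm (comb l w b (x' w))"
      if "w \<in> insert a V" for w
    proof (cases "w = a")
      case True
      then show ?thesis using y yE by (simp add: x'_def)
    next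
      case False
      then show ?thesis using that x1 by (simp add: x'_def)
    qed
    show ?case using P Q by blast
  qed
qed

lemma pythag_sum:
  assumes "finite V" "\<forall>w\<in>V. \<forall>w'\<in>V. w \<noteq> w' \<longrightarrow> cinner (f w) (f w') = 0"
  shows "cinner (\<Sum>w\<in>V. f w) (\<Sum>w\<in>V. f w) = (\<Sum>w\<in>V. cinner (f w :: 'a::complex_inner) (f w))"
proof -
  have "cinner (\<Sum>w\<in>V. f w) (\<Sum>w\<in>V. f w) = (\<Sum>w'\<in>V. \<Sum>w\<in>V. cinner (f w) (f w'))"
    by (simp add: cinner_sum_left cinner_sum_right)
  also have "\<dots> = (\<Sum>w\<in>V. \<Sum>w'\<in>V. cinner (f w) (f w'))"
    by (rule sum.swap)
  also have "\<dots> = (\<Sum>w\<in>V. cinner (f w) (f w))"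
  proof (rule sum.cong[OF refl])
    fix w assume w: "w \<in> V"
    have "(\<Sum>w'\<in>V. cinner (f w) (f w')) = cinner (f w) (f w) + (\<Sum>w'\<in>V - {w}. cinner (f w) (f w'))"
      using assms(1) w by (simp add: sum.remove)
    also have "(\<Sum>w'\<in>V - {w}. cinner (f w) (f w')) = 0"
      using assms(2) w by (intro sum.neutral) auto
    finally show "(\<Sum>w'\<in>V. cinner (f w) (f w')) = cinner (f w) (f w)" by simp
  qed
  finally show ?thesis .
qed

lemma comb_cross_zero:
  assumes "\<forall>i<l. \<forall>j<l. cinner (b j x) (b i y) = 0"
  shows "cinner (comb l v b x) (comb l v b y) = 0"
  unfolding comb_def using assms
  by (simp add: cinner_sum_left cinner_sum_right cinner_scaleC_left cinner_scaleC_right)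

lemma lemmaA:
  fixes b :: "nat \<Rightarrow> 'a::chilbert_space \<Rightarrow> 'a"
  assumes l: "l \<ge> 1" and bop: "\<forall>j<l. bounded_op (b j)" and li: "lin_indep_mod_compact l b"
  shows "\<exists>\<gamma>>0. \<forall>E. finite E \<longrightarrow> (\<exists>\<xi>. norm \<xi> = 1 \<and> (\<forall>e\<in>E. cinner \<xi> e = 0) \<and>
            (\<forall>v. \<gamma> * (nrm1 l v)^2 \<le> (norm (comb l v b \<xi>))^2))"
proof -
  obtain \<delta> where \<delta>: "\<delta> > 0"
    and D: "\<forall>v E. finite E \<longrightarrow> (\<exists>x. norm x = 1 \<and> (\<forall>e\<in>E. cinner x e = 0) \<and> \<delta> * nrm1 l v \<le> norm (comb l v b x))"
    using unif_delta[OF l bop li] by blast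
  obtain K where K: "\<forall>j. K j > 0" "\<forall>j<l. \<forall>x. norm (b j x) \<le> norm x * K j"
    using bop_bounds[OF bop] by blast
  define C where "C = (\<Sum>j<l. K j)"
  have "0 \<in> {..<l}" using l by simp
  then have "{..<l} \<noteq> {}" by blast
  then have C: "C > 0" unfolding C_def using K(1) by (intro sum_pos) auto
  define \<rho> where "\<rho> = \<delta> / (2 * (\<delta> + C))"
  have \<rho>: "\<rho> > 0" using \<delta> C by (simp add: \<rho>_def)
  obtain V where V: "finite V" "\<forall>v. nrm1 l v = 1 \<longrightarrow> (\<exists>w\<in>V. nrm1 l (\<lambda>i. v i - w i) \<le> \<rho>)"
    using grid[OF \<rho>] by blast
  have "\<exists>w\<in>V. True" using V(2) nrm1_unit0[OF l] by blast
  then have Vne: "V \<noteq> {}" by blast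
  define N where "N = card V"
  have N: "N > 0" using V(1) Vne by (simp add: N_def card_gt_0_iff)
  define \<gamma> where "\<gamma> = \<delta>^2 / (4 * real N)"
  have \<gamma>: "\<gamma> > 0" using \<delta> N by (simp add: \<gamma>_def)
  have main: "\<exists>\<xi>. norm \<xi> = 1 \<and> (\<forall>e\<in>E. cinner \<xi> e = 0) \<and> (\<forall>v. \<gamma> * (nrm1 l v)^2 \<le> (norm (comb l v b \<xi>))^2)"
    if E: "finite E" for E
  proof -
    from construct[OF bop D V(1) E] obtain x where xx: "(\<forall>w\<in>V. norm (x w) = 1 \<and> (\<forall>e\<in>E. cinner (x w) e = 0) \<and> \<delta> * nrm1 l w \<le> norm (comb l w b (x w))) \<and>
      (\<forall>w\<in>V. \<forall>w'\<in>V. w \<noteq> w' \<longrightarrow> cinner (x w) (x w') = 0 \<and> (\<forall>i<l. \<forall>j<l. cinner (b j (x w)) (b i (x w')) = 0))"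
      ..
    note x1 = conjunct1[OF xx] and x2 = conjunct2[OF xx]
    define s where "s = complex_of_real (1 / sqrt (real N))"
    define \<xi> where "\<xi> = scaleC s (\<Sum>w\<in>V. x w)"
    have cs: "cmod s = 1 / sqrt (real N)" using N by (simp add: s_def norm_divide)
    have "cinner (\<Sum>w\<in>V. x w) (\<Sum>w\<in>V. x w) = (\<Sum>w\<in>V. cinner (x w) (x w))"
      using x2 by (intro pythag_sum V(1)) blast
    also have "\<dots> = (\<Sum>w\<in>V. 1)" using x1 by (intro sum.cong refl) (simp add: cinner_self)
    finally have "(norm (\<Sum>w\<in>V. x w))^2 = real N" by (simp add: norm_sq_cinner N_def)
    then have nS: "norm (\<Sum>w\<in>V. x w) = sqrt (real N)" by (metis norm_ge_zero real_sqrt_unique)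
    have n\<xi>: "norm \<xi> = 1" unfolding \<xi>_def using N by (simp add: norm_scaleC cs nS)
    have o\<xi>: "\<forall>e\<in>E. cinner \<xi> e = 0"
      unfolding \<xi>_def using x1 by (simp add: cinner_scaleC_left cinner_sum_left)
    have bc: "bounded_op (comb l v b)" for v by (rule bop_comb[OF bop])
    have sq: "(norm (comb l v b \<xi>))^2 = (\<Sum>w\<in>V. (norm (comb l v b (x w)))^2) / real N" for v
    proof -
      have "comb l v b \<xi> = scaleC s (\<Sum>w\<in>V. comb l v b (x w))"
        unfolding \<xi>_def by (simp add: bop_scaleC[OF bc] bop_sum[OF bc])
      moreover have "cinner (\<Sum>w\<in>V. comb l v b (x w)) (\<Sum>w\<in>V. comb l v b (x w)) = (\<Sum>w\<in>V. cinner (comb l v b (x w)) (comb l v b (x w)))"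
        using x2 by (intro pythag_sum V(1)) (blast intro: comb_cross_zero)
      then have "(norm (\<Sum>w\<in>V. comb l v b (x w)))^2 = (\<Sum>w\<in>V. (norm (comb l v b (x w)))^2)"
        by (simp add: norm_sq_cinner)
      ultimately show ?thesis using N by (simp add: norm_scaleC cs power_mult_distrib power_divide)
    qed
    have unitv: "\<gamma> \<le> (norm (comb l v b \<xi>))^2" if v1: "nrm1 l v = 1" for v
    proof -
      obtain w where w: "w \<in> V" "nrm1 l (\<lambda>i. v i - w i) \<le> \<rho>" using V(2) v1 by blast
      have "nrm1 l v \<le> nrm1 l w + nrm1 l (\<lambda>i. v i - w i)" by (rule nrm1_triangle)
      then have nw: "1 - \<rho> \<le> nrm1 l w" using v1 w(2) by linarith
      have sym: "nrm1 l (\<lambda>i. w i - v i) = nrm1 l (\<lambda>i. v i - w i)"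
        unfolding nrm1_def by (intro sum.cong refl) (simp add: norm_minus_commute)
      have "comb l v b (x w) = comb l w b (x w) - comb l (\<lambda>i. w i - v i) b (x w)"
        by (simp add: comb_diff)
      then have "norm (comb l w b (x w)) - norm (comb l (\<lambda>i. w i - v i) b (x w)) \<le> norm (comb l v b (x w))"
        by (metis norm_triangle_ineq2)
      moreover have "norm (comb l (\<lambda>i. w i - v i) b (x w)) \<le> \<rho> * C"
      proof -
        have "norm (comb l (\<lambda>i. w i - v i) b (x w)) \<le> nrm1 l (\<lambda>i. w i - v i) * C * norm (x w)"
          unfolding C_def by (rule comb_norm_le[OF K(2,1)])
        also have "\<dots> \<le> \<rho> * C" using x1 w sym C by (simp add: mult_right_mono)
        finally show ?thesis .
      qed
      moreover have "\<delta> * (1 - \<rho>) \<le> norm (comb l w b (x w))"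
        using x1 w(1) nw \<delta> by (meson mult_left_mono less_imp_le order_trans)
      moreover have "\<delta> * (1 - \<rho>) - \<rho> * C = \<delta> / 2"
      proof -
        have pos: "\<delta> + C > 0" using \<delta> C by simp
        have "\<rho> * (\<delta> + C) = \<delta> / 2" unfolding \<rho>_def using pos by (simp add: field_simps)
        moreover have "\<delta> * (1 - \<rho>) - \<rho> * C = \<delta> - \<rho> * (\<delta> + C)" by (simp add: algebra_simps)
        ultimately show ?thesis by simp
      qed
      ultimately have h: "\<delta> / 2 \<le> norm (comb l v b (x w))" by linarith
      have "(\<delta> / 2)^2 \<le> (norm (comb l v b (x w)))^2" using h \<delta> by (intro power_mono) auto
      also have "\<dots> \<le> (\<Sum>w\<in>V. (norm (comb l v b (x w)))^2)"
        using V(1) w(1) by (intro member_le_sum) auto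
      finally have "(\<delta> / 2)^2 / real N \<le> (norm (comb l v b \<xi>))^2"
        unfolding sq using N by (simp add: divide_right_mono)
      then show ?thesis by (simp add: \<gamma>_def power_divide)
    qed
    have "\<gamma> * (nrm1 l v)^2 \<le> (norm (comb l v b \<xi>))^2" for v
    proof (cases "nrm1 l v > 0")
      case False
      then have "nrm1 l v = 0" using nrm1_nonneg[of l v] by simp
      then show ?thesis by simp
    next
      case True
      define n where "n = nrm1 l v"
      define v' where "v' i = complex_of_real (1 / n) * v i" for i
      have "nrm1 l v' = cmod (complex_of_real (1 / n)) * nrm1 l v" unfolding v'_def by (rule nrm1_scale)
      then have "nrm1 l v' = 1" using True by (simp add: n_def norm_divide)
      then have "\<gamma> \<le> (norm (comb l v' b \<xi>))^2" by (rule unitv)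
      also have "norm (comb l v' b \<xi>) = norm (comb l v b \<xi>) / n"
        unfolding v'_def comb_cscale using True by (simp add: n_def norm_scaleC norm_divide)
      finally have "\<gamma> \<le> (norm (comb l v b \<xi>))^2 / n^2" by (simp add: power_divide)
      then show ?thesis using True by (simp add: n_def pos_le_divide_eq mult.commute)
    qed
    then show ?thesis using n\<xi> o\<xi> by blast
  qed
  show ?thesis using \<gamma> main by blast
qed

lemma refine_one:
  fixes f :: "'b \<Rightarrow> complex"
  assumes G: "G \<noteq> bot" and ev: "eventually (\<lambda>\<alpha>. cmod (f \<alpha>) \<le> B) G"
  shows "\<exists>z. inf G (filtercomap f (nhds z)) \<noteq> bot"
proof -
  have "filtermap f G \<noteq> bot" using G by (simp add: filtermap_bot_iff)
  moreover have "eventually (\<lambda>z. z \<in> cball 0 B) (filtermap f G)"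
    using ev by (simp add: eventually_filtermap)
  ultimately obtain z where z: "inf (nhds z) (filtermap f G) \<noteq> bot"
    using compact_filter[THEN iffD1, OF compact_cball[of "0::complex" B]] by blast
  show ?thesis
  proof (intro exI notI)
    assume "inf G (filtercomap f (nhds z)) = bot"
    then have "eventually (\<lambda>x. False) (inf G (filtercomap f (nhds z)))" by simp
    then obtain Q R where QR: "eventually Q G" "eventually R (filtercomap f (nhds z))" "\<forall>x. Q x \<and> R x \<longrightarrow> False"
      unfolding eventually_inf by blast
    then obtain S where S: "eventually S (nhds z)" "\<forall>x. S (f x) \<longrightarrow> R x"
      unfolding eventually_filtercomap by blast
    have "eventually (\<lambda>x. \<not> S (f x)) G" using QR(1) by (rule eventually_mono) (use QR(3) S(2) in blast)
    then have "eventually (\<lambda>y. \<not> S y) (filtermap f G)" by (simp add: eventually_filtermap)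
    then have "eventually (\<lambda>y. False) (inf (nhds z) (filtermap f G))"
      unfolding eventually_inf using S(1) by blast
    then show False using z by simp
  qed
qed

lemma refine:
  fixes f :: "'p \<Rightarrow> 'b \<Rightarrow> complex"
  assumes "finite P" "G \<noteq> bot" "\<forall>p\<in>P. eventually (\<lambda>\<alpha>. cmod (f p \<alpha>) \<le> B) G"
  shows "\<exists>G' c. G' \<noteq> bot \<and> G' \<le> G \<and> (\<forall>p\<in>P. (f p \<longlongrightarrow> c p) G')"
  using assms(1,3)
proof (induction P rule: finite_induct)
  case empty
  show ?case using assms(2) by (intro exI[of _ G]) auto
next
  case (insert q P)
  then obtain G1 c where G1: "G1 \<noteq> bot" "G1 \<le> G" "\<forall>p\<in>P. (f p \<longlongrightarrow> c p) G1" by auto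
  have "eventually (\<lambda>\<alpha>. cmod (f q \<alpha>) \<le> B) G1" using insert.prems G1(2) filter_leD by blast
  then obtain z where z: "inf G1 (filtercomap (f q) (nhds z)) \<noteq> bot" using refine_one[OF G1(1)] by blast
  define G2 where "G2 = inf G1 (filtercomap (f q) (nhds z))"
  have G2: "G2 \<le> G1" unfolding G2_def by simp
  have "(f q \<longlongrightarrow> z) G2" unfolding G2_def filterlim_iff_le_filtercomap by simp
  moreover have "\<forall>p\<in>P. (f p \<longlongrightarrow> c p) G2" using G1(3) G2 tendsto_mono by blast
  ultimately have "\<forall>p\<in>insert q P. (f p \<longlongrightarrow> (c(q := z)) p) G2" using insert(2) by auto
  moreover have "G2 \<noteq> bot" using z by (simp add: G2_def)
  moreover have "G2 \<le> G" using G2 G1(2) by simp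
  ultimately show ?case by blast
qed

theorem lemma3p2:
  fixes b :: "nat \<Rightarrow> 'a::chilbert_space \<Rightarrow> 'a" and l :: nat
  assumes "l \<ge> 1"
    and "\<forall>j<l. bounded_op (b j)"
  shows "lin_indep_mod_compact l b \<longleftrightarrow>
    (\<exists>(F :: 'a filter) (\<xi> :: 'a \<Rightarrow> 'a). F \<noteq> bot \<and> (\<forall>\<alpha>. norm (\<xi> \<alpha>) = 1) \<and>
       (\<forall>\<eta>. ((\<lambda>\<alpha>. cinner (\<xi> \<alpha>) \<eta>) \<longlongrightarrow> 0) F) \<and>
       (\<exists>M. (\<forall>i<l. \<forall>j<l. ((\<lambda>\<alpha>. Qmat b (\<xi> \<alpha>) i j) \<longlongrightarrow> M i j) F) \<and> pos_def_mat l M))"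
proof
  assume li: "lin_indep_mod_compact l b"
  obtain \<gamma> where \<gamma>: "\<gamma> > 0" and A: "\<forall>E. finite E \<longrightarrow> (\<exists>\<xi>. norm \<xi> = 1 \<and> (\<forall>e\<in>E. cinner \<xi> e = 0) \<and>
            (\<forall>v. \<gamma> * (nrm1 l v)^2 \<le> (norm (comb l v b \<xi>))^2))"
    using lemmaA[OF assms li] by blast
  define W where "W = {\<xi>. norm \<xi> = 1 \<and> (\<forall>v. \<gamma> * (nrm1 l v)^2 \<le> (norm (comb l v b \<xi>))^2)}"
  have AW: "\<exists>\<xi>\<in>W. \<forall>e\<in>E. cinner \<xi> e = 0" if "finite E" for E
    using A that unfolding W_def by blast
  define F0 where "F0 = (INF \<eta>\<in>UNIV. principal {\<xi>\<in>W. cinner \<xi> \<eta> = 0})"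
  have F0nb: "F0 \<noteq> bot" unfolding F0_def
  proof (rule INF_filter_not_bot)
    fix X :: "'a set" assume X: "X \<subseteq> UNIV" "finite X"
    obtain \<xi> where \<xi>: "\<xi> \<in> W" "\<forall>e\<in>X. cinner \<xi> e = 0" using AW[OF X(2)] by blast
    have "(INF \<eta>\<in>X. principal {\<xi>\<in>W. cinner \<xi> \<eta> = 0}) = principal (\<Inter>\<eta>\<in>X. {\<xi>\<in>W. cinner \<xi> \<eta> = 0})"
      by (rule INF_principal_finite[OF X(2)])
    moreover have "\<xi> \<in> (\<Inter>\<eta>\<in>X. {\<xi>\<in>W. cinner \<xi> \<eta> = 0})" using \<xi> by blast
    ultimately show "(INF \<eta>\<in>X. principal {\<xi>\<in>W. cinner \<xi> \<eta> = 0}) \<noteq> bot"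
      by (auto simp: principal_eq_bot_iff)
  qed
  have ev\<eta>: "eventually (\<lambda>\<xi>. \<xi> \<in> W \<and> cinner \<xi> \<eta> = 0) F0" for \<eta>
    unfolding F0_def by (rule eventually_INF1[of \<eta>]) (auto simp: eventually_principal)
  have evW: "eventually (\<lambda>\<xi>. \<xi> \<in> W) F0" using ev\<eta>[of 0] by (rule eventually_mono) simp
  obtain K where K: "\<forall>j. K j > 0" "\<forall>j<l. \<forall>x. norm (b j x) \<le> norm x * K j"
    using bop_bounds[OF assms(2)] by blast
  define C where "C = (\<Sum>j<l. K j)"
  have KC: "K j \<le> C" if "j < l" for j
    unfolding C_def using that K(1) by (intro member_le_sum) (auto intro: less_imp_le)
  define P where "P = {..<l} \<times> {..<l}"
  define f where "f p \<alpha> = Qmat b \<alpha> (fst p) (snd p)" for p and \<alpha> :: 'a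
  have bnd: "\<forall>p\<in>P. eventually (\<lambda>\<alpha>. cmod (f p \<alpha>) \<le> C * C) F0"
  proof
    fix p assume p: "p \<in> P"
    show "eventually (\<lambda>\<alpha>. cmod (f p \<alpha>) \<le> C * C) F0"
    proof (rule eventually_mono[OF evW])
      fix \<alpha> assume "\<alpha> \<in> W"
      then have n1: "norm \<alpha> = 1" by (simp add: W_def)
      have pl: "fst p < l" "snd p < l" using p by (auto simp: P_def)
      have nb: "norm (b j \<alpha>) \<le> C" if "j < l" for j
      proof -
        have "norm (b j \<alpha>) \<le> norm \<alpha> * K j" using K(2) that by blast
        then show ?thesis using n1 KC[OF that] by simp
      qed
      have C0: "0 \<le> C" using nb[OF pl(1)] norm_ge_zero order_trans by blast
      have "cmod (f p \<alpha>) \<le> norm (b (snd p) \<alpha>) * norm (b (fst p) \<alpha>)"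
        unfolding f_def Qmat_def by (rule Cauchy_Schwarz)
      also have "\<dots> \<le> C * C" using nb[OF pl(2)] nb[OF pl(1)] C0 by (intro mult_mono) auto
      finally show "cmod (f p \<alpha>) \<le> C * C" .
    qed
  qed
  obtain G c where G: "G \<noteq> bot" "G \<le> F0" "\<forall>p\<in>P. (f p \<longlongrightarrow> c p) G"
    using refine[OF _ F0nb bnd] by (auto simp: P_def)
  have GW: "eventually (\<lambda>\<xi>. \<xi> \<in> W) G" using evW G(2) filter_leD by blast
  obtain w0 where w0: "w0 \<in> W" using AW[of "{}"] by auto
  define \<xi>f where "\<xi>f \<alpha> = (if \<alpha> \<in> W then \<alpha> else w0)" for \<alpha>
  define M where "M i j = c (i, j)" for i j
  have evid: "eventually (\<lambda>\<alpha>. \<xi>f \<alpha> = \<alpha>) G" using GW by (rule eventually_mono) (simp add: \<xi>f_def)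
  have limQ: "((\<lambda>\<alpha>. Qmat b \<alpha> i j) \<longlongrightarrow> M i j) G" if "i < l" "j < l" for i j
    using G(3) that unfolding P_def f_def M_def by auto
  show "\<exists>(F :: 'a filter) (\<xi> :: 'a \<Rightarrow> 'a). F \<noteq> bot \<and> (\<forall>\<alpha>. norm (\<xi> \<alpha>) = 1) \<and>
       (\<forall>\<eta>. ((\<lambda>\<alpha>. cinner (\<xi> \<alpha>) \<eta>) \<longlongrightarrow> 0) F) \<and>
       (\<exists>M. (\<forall>i<l. \<forall>j<l. ((\<lambda>\<alpha>. Qmat b (\<xi> \<alpha>) i j) \<longlongrightarrow> M i j) F) \<and> pos_def_mat l M)"
  proof (intro exI conjI allI impI)
    show "G \<noteq> bot" by (rule G(1))
    show "norm (\<xi>f \<alpha>) = 1" for \<alpha> using w0 by (simp add: \<xi>f_def W_def)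
    show "((\<lambda>\<alpha>. cinner (\<xi>f \<alpha>) \<eta>) \<longlongrightarrow> 0) G" for \<eta>
    proof (rule tendsto_eventually)
      have "eventually (\<lambda>\<xi>. \<xi> \<in> W \<and> cinner \<xi> \<eta> = 0) G" using ev\<eta>[of \<eta>] G(2) filter_leD by blast
      then show "eventually (\<lambda>\<alpha>. cinner (\<xi>f \<alpha>) \<eta> = 0) G" by (rule eventually_mono) (simp add: \<xi>f_def)
    qed
    show "((\<lambda>\<alpha>. Qmat b (\<xi>f \<alpha>) i j) \<longlongrightarrow> M i j) G" if "i < l" "j < l" for i j
    proof -
      have "eventually (\<lambda>\<alpha>. Qmat b \<alpha> i j = Qmat b (\<xi>f \<alpha>) i j) G" using evid by (rule eventually_mono) simp
      then show ?thesis by (rule iffD1[OF tendsto_cong limQ[OF that]])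
    qed
    show "pos_def_mat l M"
      unfolding pos_def_mat_def
    proof (intro conjI allI impI)
      fix i j assume ij: "i < l" "j < l"
      have "((\<lambda>\<alpha>. Qmat b \<alpha> j i) \<longlongrightarrow> M j i) G" using limQ ij by blast
      moreover have "((\<lambda>\<alpha>. Qmat b \<alpha> j i) \<longlongrightarrow> cnj (M i j)) G"
      proof -
        have "((\<lambda>\<alpha>. cnj (Qmat b \<alpha> i j)) \<longlongrightarrow> cnj (M i j)) G" using limQ ij by (intro tendsto_cnj) blast
        moreover have "(\<lambda>\<alpha>. cnj (Qmat b \<alpha> i j)) = (\<lambda>\<alpha>. Qmat b \<alpha> j i)"
          unfolding Qmat_def by (rule ext) (subst cinner_commute, simp)
        ultimately show ?thesis by simp
      qed
      ultimately show "M j i = cnj (M i j)" by (rule tendsto_unique[OF G(1)])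
    next
      fix v :: "nat \<Rightarrow> complex" assume v: "\<exists>i<l. v i \<noteq> 0"
      have lim: "((\<lambda>\<alpha>. Re (\<Sum>i<l. \<Sum>j<l. cnj (v i) * Qmat b \<alpha> i j * v j)) \<longlongrightarrow>
                   Re (\<Sum>i<l. \<Sum>j<l. cnj (v i) * M i j * v j)) G"
      proof (intro tendsto_Re tendsto_sum)
        fix i j assume "i \<in> {..<l}" "j \<in> {..<l}"
        then have "((\<lambda>\<alpha>. Qmat b \<alpha> i j) \<longlongrightarrow> M i j) G" using limQ by simp
        then show "((\<lambda>\<alpha>. cnj (v i) * Qmat b \<alpha> i j * v j) \<longlongrightarrow> cnj (v i) * M i j * v j) G"
          by (intro tendsto_mult_right tendsto_mult_left)
      qed
      have "eventually (\<lambda>\<alpha>. \<gamma> * (nrm1 l v)^2 \<le> Re (\<Sum>i<l. \<Sum>j<l. cnj (v i) * Qmat b \<alpha> i j * v j)) G"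
        using GW by (rule eventually_mono) (simp only: Q_quadratic_Re, simp add: W_def)
      then have "\<gamma> * (nrm1 l v)^2 \<le> Re (\<Sum>i<l. \<Sum>j<l. cnj (v i) * M i j * v j)"
        by (rule tendsto_lowerbound[OF lim _ G(1)])
      moreover have "nrm1 l v > 0" using v nrm1_pos_iff by blast
      ultimately show "0 < Re (\<Sum>i<l. \<Sum>j<l. cnj (v i) * M i j * v j)"
      proof -
        have "0 < \<gamma> * (nrm1 l v)^2" using \<gamma> \<open>nrm1 l v > 0\<close> by simp
        then show ?thesis using \<open>\<gamma> * (nrm1 l v)^2 \<le> Re (\<Sum>i<l. \<Sum>j<l. cnj (v i) * M i j * v j)\<close> by linarith
      qed
    qed
  qed
next
  assume "\<exists>(F :: 'a filter) (\<xi> :: 'a \<Rightarrow> 'a). F \<noteq> bot \<and> (\<forall>\<alpha>. norm (\<xi> \<alpha>) = 1) \<and>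
       (\<forall>\<eta>. ((\<lambda>\<alpha>. cinner (\<xi> \<alpha>) \<eta>) \<longlongrightarrow> 0) F) \<and>
       (\<exists>M. (\<forall>i<l. \<forall>j<l. ((\<lambda>\<alpha>. Qmat b (\<xi> \<alpha>) i j) \<longlongrightarrow> M i j) F) \<and> pos_def_mat l M)"
  then obtain F :: "'a filter" and \<xi> :: "'a \<Rightarrow> 'a" and M where
    H: "F \<noteq> bot" "\<forall>\<alpha>. norm (\<xi> \<alpha>) = 1" "\<forall>\<eta>. ((\<lambda>\<alpha>. cinner (\<xi> \<alpha>) \<eta>) \<longlongrightarrow> 0) F"
       "\<forall>i<l. \<forall>j<l. ((\<lambda>\<alpha>. Qmat b (\<xi> \<alpha>) i j) \<longlongrightarrow> M i j) F" "pos_def_mat l M"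
    by blast
  show "lin_indep_mod_compact l b" by (rule dir2[OF assms(2) H])
qed

end
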